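(* For all integers $m\ge1$, $n\ge1$ one has the identity $$ {}_{2m+5}F_{2m+4}\!\left[\begin{matrix}a,\frac a2+1,b_1,c_1,\dots,b_{m+1},c_{m+1},-n\\ \frac a2,1+a-b_1,1+a-c_1,\dots,1+a-b_{m+1},1+a-c_{m+1},1+a+n\end{matrix};1\right] $$ $$ =\frac{(1+a)_n(1+a-b_m-c_{m+1})_n(1+a-b_{m+1}-c_{m+1})_n(1+a-c_m-c_{m+1})_n}{(1+a-b_m)_n(1+a-b_{m+1})_n(1+a-c_m)_n(1+a-c_{m+1})_n} \sum_{0\le i_1\le\dots\le i_m\le n}\frac{(-n)_{i_m}(c_{m+1})_{i_m}}{(-a-n+b_m+c_{m+1})_{i_m}(-a-n+b_{m+1}+c_{m+1})_{i_m}} $$ $$ \cdot\frac{(-1-2a-n+b_m+b_{m+1}+c_m+c_{m+1})_{i_m}\,(-a-n+c_{m+1})_{i_m-i_{m-1}}\,(b_{m+1})_{i_{m-1}}}{(-a-n+c_m+c_{m+1})_{i_m}\,(i_m-i_{m-1})!\,(-1-2a-n+b_m+b_{m+1}+c_m+c_{m+1})_{i_{m-1}}} \prod_{k=1}^{m-1}\frac{(1+a-b_k-c_k)_{i_k-i_{k-1}}(b_{k+1})_{i_k}(c_{k+1})_{i_k}}{(i_k-i_{k-1})!\,(1+a-b_k)_{i_k}(1+a-c_k)_{i_k}}, $$ where $i_0=0$ and an empty product (case $m=1$) equals $1$.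
   Context: $(x)_k=x(x+1)\cdots(x+k-1)$, $(x)_0=1$. The hypergeometric series is ${}_{q+1}F_q\!\left[\begin{matrix}\alpha_0,\dots,\alpha_q\\ \beta_1,\dots,\beta_q\end{matrix};z\right]=\sum_{k\ge0}\frac{(\alpha_0)_k\cdots(\alpha_q)_k}{k!\,(\beta_1)_k\cdots(\beta_q)_k}z^k$; here it terminates because of the parameter $-n$. The parameters $a,b_1,c_1,\dots,b_{m+1},c_{m+1}$ are complex numbers for which all terms are defined (equivalently, the identity holds as an identity of rational functions in these parameters). *)

theory Defs
  imports Complex_Main
begin

definition hyper_term :: "complex list \<Rightarrow> complex list \<Rightarrow> complex \<Rightarrow> nat \<Rightarrow> complex" where
  "hyper_term as bs z k =
     (\<Prod>x\<leftarrow>as. pochhammer x k) / (fact k * (\<Prod>y\<leftarrow>bs. pochhammer y k)) * z ^ k"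

definition hypergeom :: "complex list \<Rightarrow> complex list \<Rightarrow> complex \<Rightarrow> complex" where
  "hypergeom as bs z = (\<Sum>k. hyper_term as bs z k)"

definition chains :: "nat \<Rightarrow> nat \<Rightarrow> (nat \<Rightarrow> nat) set" where
  "chains m n = {i. i 0 = 0 \<and> (\<forall>k>m. i k = 0) \<and>
                    (\<forall>k\<in>{1..m}. i (k - 1) \<le> i k) \<and> i m \<le> n}"

end

theory Submission
  imports Defs
begin

abbreviation P :: "complex \<Rightarrow> nat \<Rightarrow> complex" where "P \<equiv> pochhammer"

lemma binom_c: "k \<le> n \<Longrightarrow> (of_nat (n choose k) :: complex) = fact n / (fact k * fact (n - k))"
  by (simp add: binomial_fact)

lemma SP_step:
  fixes A B C :: complex
  defines "u \<equiv> C - A - B"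
  shows "of_nat (Suc (Suc i) + s choose Suc i) * P A (Suc i) * P B (Suc i) * P u (Suc s) * P (C + of_nat (Suc i)) (Suc s)
       - (C - A + of_nat (Suc i + s)) * (C - B + of_nat (Suc i + s)) *
         (of_nat (Suc i + s choose Suc i) * P A (Suc i) * P B (Suc i) * P u s * P (C + of_nat (Suc i)) s)
     = (- of_nat (Suc i + s choose Suc i) * P A (Suc (Suc i)) * P B (Suc (Suc i)) * P u s * P (C + of_nat (Suc i)) s)
       - (- of_nat (Suc i + s choose i) * P A (Suc i) * P B (Suc i) * P u (Suc s) * P (C + of_nat (Suc i) - 1) (Suc s))"
proof -
  define D where "D = (fact (Suc i + s) / (fact (Suc i) * fact (Suc s)) :: complex)"
  define x where "x = (of_nat i :: complex)"
  define y where "y = (of_nat s :: complex)"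
  have fs: "(fact (Suc s) :: complex) = (y+1) * fact s" by (simp add: y_def fact_Suc)
  have fi: "(fact (Suc i) :: complex) = (x+1) * fact i" by (simp add: x_def fact_Suc)
  have fis: "(fact (Suc (Suc i) + s) :: complex) = (x+y+2) * fact (Suc i + s)" 
    by (simp add: x_def y_def fact_Suc algebra_simps)
  have nz: "(fact s :: complex) \<noteq> 0" "(fact i :: complex) \<noteq> 0" "y + 1 \<noteq> 0" "x + 1 \<noteq> 0"
    by (auto simp: x_def y_def) (metis of_nat_Suc of_nat_eq_0_iff add.commute nat.distinct(1))+
  have c1: "(of_nat (Suc (Suc i) + s choose Suc i) :: complex) = D * (x+y+2)"
    by (subst binom_c, simp) (simp add: D_def fis x_def y_def)
  have ab: "\<And>F G H t::complex. H \<noteq> 0 \<Longrightarrow> t \<noteq> 0 \<Longrightarrow> F / (G * H) = F / (G * (t * H)) * t"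
    by (simp add: field_simps)
  have ab2: "\<And>F G H t::complex. G \<noteq> 0 \<Longrightarrow> t \<noteq> 0 \<Longrightarrow> F / (G * H) = F / ((t * G) * H) * t"
    by (simp add: field_simps)
  have c2: "(of_nat (Suc i + s choose Suc i) :: complex) = D * (y+1)"
    apply (subst binom_c, simp) unfolding D_def fs using ab nz by simp
  have c3: "(of_nat (Suc i + s choose i) :: complex) = D * (x+1)"
    apply (subst binom_c, simp) unfolding D_def fi using ab2 nz by simp
  have pS: "\<And>z n. P z (Suc n) = P z n * (z + of_nat n)" by (rule pochhammer_Suc)
  have p1: "P (C + of_nat (Suc i) - 1) (Suc s) = (C + x) * P (C + of_nat (Suc i)) s"
    by (simp add: pochhammer_rec algebra_simps x_def)
  have si: "(of_nat (Suc i) :: complex) = x + 1" "(of_nat (Suc i + s) :: complex) = x + y + 1"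
    by (simp_all add: x_def y_def)
  show ?thesis
    unfolding p1 unfolding c1 c2 c3 pS si x_def[symmetric] y_def[symmetric] u_def
    by algebra
qed

definition spf :: "complex \<Rightarrow> complex \<Rightarrow> complex \<Rightarrow> nat \<Rightarrow> nat \<Rightarrow> complex" where
  "spf A B C N j = of_nat (N choose j) * P A j * P B j * P (C - A - B) (N - j) * P (C + of_nat j) (N - j)"

definition spg :: "complex \<Rightarrow> complex \<Rightarrow> complex \<Rightarrow> nat \<Rightarrow> nat \<Rightarrow> complex" where
  "spg A B C N j = (if j = 0 then 0 else - of_nat (N choose (j - 1)) * P A j * P B j
      * P (C - A - B) (Suc N - j) * P (C + of_nat j - 1) (Suc N - j))"

lemma SP_term:
  assumes "j \<le> Suc N"
  shows "spf A B C (Suc N) j - (C - A + of_nat N) * (C - B + of_nat N) * spf A B C N j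
       = spg A B C N (Suc j) - spg A B C N j"
proof (cases j)
  case 0
  then show ?thesis
    by (simp add: spf_def spg_def pochhammer_Suc algebra_simps)
next
  case (Suc i)
  show ?thesis
  proof (cases "j = Suc N")
    case True
    then show ?thesis using Suc
      by (simp add: spf_def spg_def)
  next
    case False
    then obtain s where N: "N = Suc i + s" using assms Suc
      by (metis le_Suc_eq less_eq_Suc_le nat_le_iff_add)
    have e: "C + of_nat (Suc (Suc i)) - 1 = C + of_nat (Suc i)" by simp
    show ?thesis using SP_step[of i s A B C] unfolding Suc N spf_def spg_def e
      by (simp add: Suc_diff_le)
  qed
qed

lemma SP:
  fixes A B C :: complex
  shows "(\<Sum>j\<le>N. of_nat (N choose j) * P A j * P B j * P (C - A - B) (N - j) * P (C + of_nat j) (N - j))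
       = P (C - A) N * P (C - B) N"
proof (induction N)
  case 0
  then show ?case by simp
next
  case (Suc N)
  have z: "spf A B C N (Suc N) = 0" by (simp add: spf_def)
  have "(\<Sum>j\<le>Suc N. spf A B C (Suc N) j) - (C - A + of_nat N) * (C - B + of_nat N) * (\<Sum>j\<le>Suc N. spf A B C N j)
      = (\<Sum>j\<le>Suc N. spf A B C (Suc N) j - (C - A + of_nat N) * (C - B + of_nat N) * spf A B C N j)"
    by (simp only: sum_subtractf sum_distrib_left)
  also have "\<dots> = (\<Sum>j\<le>Suc N. spg A B C N (Suc j) - spg A B C N j)"
    by (rule sum.cong) (auto intro: SP_term)
  also have "\<dots> = spg A B C N (Suc (Suc N)) - spg A B C N 0"
    using sum_lessThan_telescope[of "spg A B C N" "Suc (Suc N)"] by (simp add: lessThan_Suc_atMost)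
  also have "\<dots> = 0" by (simp add: spg_def)
  finally have "(\<Sum>j\<le>Suc N. spf A B C (Suc N) j) = (C - A + of_nat N) * (C - B + of_nat N) * (\<Sum>j\<le>N. spf A B C N j)"
    using z by simp
  also have "(\<Sum>j\<le>N. spf A B C N j) = P (C - A) N * P (C - B) N"
    using Suc.IH by (simp add: spf_def)
  finally show ?case
    by (simp add: spf_def pochhammer_Suc algebra_simps)
qed

lemma poch_negN: "P (- of_nat N) j = (-1)^j * fact j * of_nat (N choose j)"
proof -
  have "(of_nat N :: complex) gchoose j = (-1)^j * P (- of_nat N) j / fact j"
    by (rule gbinomial_pochhammer)
  moreover have s: "((-1::complex)^j) * (-1)^j = 1" by (induct j) auto
  ultimately have "P (- of_nat N) j = (-1)^j * fact j * ((of_nat N :: complex) gchoose j)"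
    by (simp add: field_simps) (metis (no_types, lifting) mult.assoc mult.commute mult.left_neutral s)
  thus ?thesis by (simp add: binomial_gbinomial[symmetric])
qed

lemma poch_refl: "P (x + of_nat r) j = (-1)^j * P (1 - x - of_nat r - of_nat j) j"
proof -
  have "P (- (- x - of_nat r)) j = (-1)^j * P (- x - of_nat r - of_nat j + 1) j"
    by (rule pochhammer_minus)
  thus ?thesis by (simp add: algebra_simps)
qed

lemma poch_split: "j \<le> N \<Longrightarrow> P x N = P x j * P (x + of_nat j) (N - j)"
  by (rule pochhammer_product)

lemma poch_split': "P x (j + r) = P x j * P (x + of_nat j) r"
  by (rule pochhammer_product')

lemma Saal:
  fixes A B C :: complex
  assumes C: "P C N \<noteq> 0" and X: "P (1 + A + B - C - of_nat N) N \<noteq> 0"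
  shows "(\<Sum>j\<le>N. P (- of_nat N) j * P A j * P B j / (fact j * P C j * P (1 + A + B - C - of_nat N) j))
       = P (C - A) N * P (C - B) N / (P C N * P (C - A - B) N)"
proof -
  define X where "X = 1 + A + B - C - of_nat N"
  have u: "P (C - A - B) N = (-1)^N * P X N"
    using poch_refl[of "C - A - B" 0 N] by (simp add: X_def algebra_simps)
  have uN: "P (C - A - B) N \<noteq> 0" using X unfolding u X_def by simp
  have "(\<Sum>j\<le>N. P (- of_nat N) j * P A j * P B j / (fact j * P C j * P X j)) * (P C N * P (C - A - B) N)
      = (\<Sum>j\<le>N. of_nat (N choose j) * P A j * P B j * P (C - A - B) (N - j) * P (C + of_nat j) (N - j))"
    unfolding sum_distrib_right
  proof (rule sum.cong)
    fix j assume "j \<in> {..N}"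
    then obtain r where N: "N = j + r" by (auto simp: le_iff_add)
    have cj: "P C j \<noteq> 0" using pochhammer_neq_0_mono[OF C, of j] N by simp
    have xj: "P X j \<noteq> 0" using pochhammer_neq_0_mono[OF X, of j] N unfolding X_def by simp
    have e1: "P C N = P C j * P (C + of_nat j) r" unfolding N by (rule poch_split')
    have e2: "P (C - A - B) N = P (C - A - B) r * ((-1)^j * P X j)"
      unfolding N poch_split'[of _ r j, unfolded add.commute[of r j]]
      using poch_refl[of "C - A - B" r j] by (simp add: X_def N algebra_simps)
    have f: "(fact j :: complex) \<noteq> 0" by simp
    show "P (- of_nat N) j * P A j * P B j / (fact j * P C j * P X j) * (P C N * P (C - A - B) N) =
         of_nat (N choose j) * P A j * P B j * P (C - A - B) (N - j) * P (C + of_nat j) (N - j)"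
      unfolding e1 e2 poch_negN using cj xj f by (simp add: N field_simps)
  qed simp
  also have "\<dots> = P (C - A) N * P (C - B) N" by (rule SP)
  finally show ?thesis using C uN unfolding X_def by (simp add: field_simps)
qed

lemma swap_tri: fixes n :: nat shows "(\<Sum>k\<le>n. \<Sum>j\<le>k. h k j) = (\<Sum>j\<le>n. \<Sum>l\<le>n - j. h (j + l) j)"
proof -
  have "(\<Sum>k\<le>n. \<Sum>j\<le>k. h k j) = (\<Sum>k\<le>n. \<Sum>i\<le>k. (\<lambda>i l. h (i + l) i) i (k - i))"
    by (intro sum.cong refl) (simp add: le_add_diff_inverse)
  also have "\<dots> = (\<Sum>(i,l)\<in>{(i,l). i + l \<le> n}. h (i + l) i)"
    using sum.triangle_reindex_eq[of "\<lambda>i l. h (i + l) i" n] by simp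
  also have "{(i,l). i + l \<le> n} = Sigma {..n} (\<lambda>i. {..n - i})" by auto
  also have "(\<Sum>(i,l)\<in>Sigma {..n} (\<lambda>i. {..n - i}). h (i + l) i) = (\<Sum>j\<le>n. \<Sum>l\<le>n - j. h (j + l) j)"
    by (subst sum.Sigma) auto
  finally show ?thesis .
qed

definition Rt :: "complex \<Rightarrow> complex \<Rightarrow> complex \<Rightarrow> nat \<Rightarrow> complex" where
  "Rt a b c k = P b k * P c k / (P (1 + a - b) k * P (1 + a - c) k)"

lemma S1:
  assumes "P (1 + a - b) k \<noteq> 0" "P (1 + a - c) k \<noteq> 0"
  shows "Rt a b c k = (\<Sum>j\<le>k. P (- of_nat k) j * P (a + of_nat k) j * P (1 + a - b - c) j
            / (fact j * P (1 + a - b) j * P (1 + a - c) j))"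
proof -
  have e: "1 + (a + of_nat k) + (1 + a - b - c) - (1 + a - b) - of_nat k = 1 + a - c" by simp
  have "(\<Sum>j\<le>k. P (- of_nat k) j * P (a + of_nat k) j * P (1 + a - b - c) j
            / (fact j * P (1 + a - b) j * P (1 + a - c) j))
     = P ((1 + a - b) - (a + of_nat k)) k * P ((1 + a - b) - (1 + a - b - c)) k
        / (P (1 + a - b) k * P ((1 + a - b) - (a + of_nat k) - (1 + a - b - c)) k)"
    using Saal[of "1 + a - b" k "a + of_nat k" "1 + a - b - c"] assms unfolding e by simp
  also have "P ((1 + a - b) - (a + of_nat k)) k = (-1)^k * P b k"
    using poch_refl[of "(1 + a - b) - (a + of_nat k)" 0 k] by (simp add: algebra_simps)
  also have "P ((1 + a - b) - (a + of_nat k) - (1 + a - b - c)) k = (-1)^k * P (1 + a - c) k"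
    using poch_refl[of "(1 + a - b) - (a + of_nat k) - (1 + a - b - c)" 0 k] by (simp add: algebra_simps)
  also have "(1 + a - b) - (1 + a - b - c) = c" by simp
  finally show ?thesis unfolding Rt_def by (simp add: field_simps)
qed

definition wt :: "complex \<Rightarrow> nat \<Rightarrow> nat \<Rightarrow> complex" where
  "wt a n k = P a k * (a + 2 * of_nat k) * P (- of_nat n) k / (fact k * P (1 + a + of_nat n) k)"

definition Rp :: "nat \<Rightarrow> complex \<Rightarrow> (nat \<Rightarrow> complex) \<Rightarrow> (nat \<Rightarrow> complex) \<Rightarrow> nat \<Rightarrow> complex" where
  "Rp q a b c k = (\<Prod>r<q. Rt a (b (Suc r)) (c (Suc r)) k)"

definition Fq :: "nat \<Rightarrow> complex \<Rightarrow> (nat \<Rightarrow> complex) \<Rightarrow> (nat \<Rightarrow> complex) \<Rightarrow> nat \<Rightarrow> complex" where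
  "Fq q a b c n = (\<Sum>k\<le>n. wt a n k * Rp q a b c k)"

definition Kc :: "complex \<Rightarrow> complex \<Rightarrow> complex \<Rightarrow> nat \<Rightarrow> nat \<Rightarrow> complex" where
  "Kc a b1 c1 n j = P (1 + a - b1 - c1) j / (fact j * P (1 + a - b1) j * P (1 + a - c1) j)
     * (P a (2 * j) * P (- of_nat n) j * (-1)^j / P (1 + a + of_nat n) j)"

definition sh :: "(nat \<Rightarrow> complex) \<Rightarrow> nat \<Rightarrow> nat \<Rightarrow> complex" where
  "sh b j = (\<lambda>r. b (Suc r) + of_nat j)"

lemma Rt_split: "Rt a b c (j + l) = Rt a b c j * Rt (a + 2 * of_nat j) (b + of_nat j) (c + of_nat j) l"
proof -
  have e1: "1 + (a + 2 * of_nat j) - (b + of_nat j) = (1 + a - b) + of_nat j" by simp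
  have e2: "1 + (a + 2 * of_nat j) - (c + of_nat j) = (1 + a - c) + of_nat j" by simp
  show ?thesis unfolding Rt_def e1 e2 poch_split'
    by (simp add: divide_inverse inverse_mult_distrib mult_ac)
qed

lemma Rp_split: "Rp q a b c (j + l) = Rp q a b c j * Rp q (a + 2 * of_nat j) (\<lambda>r. b r + of_nat j) (\<lambda>r. c r + of_nat j) l"
  unfolding Rp_def Rt_split prod.distrib by simp

lemma poch_negsum: "P (- of_nat (j + l)) j = (-1)^j * fact (j + l) / fact l"
  unfolding poch_negN by (subst binom_c) auto

lemma wt_term:
  assumes jl: "j + l \<le> n" and B: "P B j \<noteq> 0" and C: "P C j \<noteq> 0" and An: "P (1 + a + of_nat n) (j + l) \<noteq> 0"
  shows "wt a n (j + l) * (P (- of_nat (j + l)) j * P (a + of_nat (j + l)) j * P s j / (fact j * P B j * P C j))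
     = (P s j / (fact j * P B j * P C j) * (P a (2 * j) * P (- of_nat n) j * (-1)^j / P (1 + a + of_nat n) j))
        * wt (a + 2 * of_nat j) (n - j) l"
proof -
  have e1: "P a (j + l) * P (a + of_nat (j + l)) j = P a (2 * j) * P (a + 2 * of_nat j) l"
  proof -
    have "P a (j + l) * P (a + of_nat (j + l)) j = P a ((j + l) + j)" by (rule poch_split'[symmetric])
    also have "(j + l) + j = 2 * j + l" by simp
    also have "P a (2 * j + l) = P a (2 * j) * P (a + 2 * of_nat j) l" by (simp add: poch_split')
    finally show ?thesis .
  qed
  have e2: "P (- of_nat n) (j + l) = P (- of_nat n) j * P (- of_nat (n - j)) l"
    using jl by (simp add: poch_split' of_nat_diff)
  have e3: "P (1 + a + of_nat n) (j + l) = P (1 + a + of_nat n) j * P (1 + (a + 2 * of_nat j) + of_nat (n - j)) l"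
    using jl by (simp add: poch_split' of_nat_diff algebra_simps)
  have A1: "P (1 + a + of_nat n) j \<noteq> 0" "P (1 + (a + 2 * of_nat j) + of_nat (n - j)) l \<noteq> 0"
    using An unfolding e3 by auto
  have f: "(fact l :: complex) \<noteq> 0" "(fact j :: complex) \<noteq> 0" "(fact (j + l) :: complex) \<noteq> 0" by auto
  have e4: "a + 2 * of_nat (j + l) = (a + 2 * of_nat j) + 2 * of_nat l" by simp
  have "wt a n (j + l) * (P (- of_nat (j + l)) j * P (a + of_nat (j + l)) j * P s j / (fact j * P B j * P C j))
     = (P a (j + l) * P (a + of_nat (j + l)) j) * (a + 2 * of_nat (j + l)) * P (- of_nat n) (j + l) * P (- of_nat (j + l)) j
        * P s j / (fact (j + l) * P (1 + a + of_nat n) (j + l) * (fact j * P B j * P C j))"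
    unfolding wt_def by (simp add: field_simps)
  also have "\<dots> = (P s j / (fact j * P B j * P C j) * (P a (2 * j) * P (- of_nat n) j * (-1)^j / P (1 + a + of_nat n) j))
        * wt (a + 2 * of_nat j) (n - j) l"
    unfolding e1 e2 e3 e4 poch_negsum wt_def using A1 f B C by (simp add: field_simps)
  finally show ?thesis .
qed

lemma nz_mono: "P x n \<noteq> 0 \<Longrightarrow> k \<le> n \<Longrightarrow> P x k \<noteq> 0"
  using pochhammer_neq_0_mono by blast

lemma Rp_Suc: "Rp (Suc q) a b c k = Rt a (b 1) (c 1) k * Rp q a (\<lambda>r. b (Suc r)) (\<lambda>r. c (Suc r)) k"
  unfolding Rp_def by (subst prod.lessThan_Suc_shift) simp

lemma peel:
  assumes hb: "P (1 + a - b 1) n \<noteq> 0" and hc: "P (1 + a - c 1) n \<noteq> 0"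
    and ha: "P (1 + a + of_nat n) n \<noteq> 0"
  shows "Fq (Suc q) a b c n = (\<Sum>j\<le>n. Kc a (b 1) (c 1) n j * Rp q a (\<lambda>r. b (Suc r)) (\<lambda>r. c (Suc r)) j
            * Fq q (a + 2 * of_nat j) (sh b j) (sh c j) (n - j))"
proof -
  define b' where "b' = (\<lambda>r. b (Suc r))"
  define c' where "c' = (\<lambda>r. c (Suc r))"
  define s1 where "s1 = (\<lambda>k j. P (- of_nat k) j * P (a + of_nat k) j * P (1 + a - b 1 - c 1) j
            / (fact j * P (1 + a - b 1) j * P (1 + a - c 1) j))"
  have "Fq (Suc q) a b c n = (\<Sum>k\<le>n. \<Sum>j\<le>k. wt a n k * s1 k j * Rp q a b' c' k)"
    unfolding Fq_def Rp_Suc b'_def[symmetric] c'_def[symmetric]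
  proof (rule sum.cong)
    fix k assume "k \<in> {..n}"
    hence "Rt a (b 1) (c 1) k = (\<Sum>j\<le>k. s1 k j)"
      unfolding s1_def by (intro S1 nz_mono[OF hb] nz_mono[OF hc]) auto
    thus "wt a n k * (Rt a (b 1) (c 1) k * Rp q a b' c' k) = (\<Sum>j\<le>k. wt a n k * s1 k j * Rp q a b' c' k)"
      by (simp add: sum_distrib_left sum_distrib_right mult_ac)
  qed simp
  also have "\<dots> = (\<Sum>j\<le>n. \<Sum>l\<le>n - j. wt a n (j + l) * s1 (j + l) j * Rp q a b' c' (j + l))"
    by (rule swap_tri)
  also have "\<dots> = (\<Sum>j\<le>n. Kc a (b 1) (c 1) n j * Rp q a b' c' j * Fq q (a + 2 * of_nat j) (sh b j) (sh c j) (n - j))"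
  proof (rule sum.cong)
    fix j assume j: "j \<in> {..n}"
    have shb: "(\<lambda>r. b' r + of_nat j) = sh b j" "(\<lambda>r. c' r + of_nat j) = sh c j"
      by (auto simp: sh_def b'_def c'_def)
    show "(\<Sum>l\<le>n - j. wt a n (j + l) * s1 (j + l) j * Rp q a b' c' (j + l)) =
         Kc a (b 1) (c 1) n j * Rp q a b' c' j * Fq q (a + 2 * of_nat j) (sh b j) (sh c j) (n - j)"
      unfolding Fq_def sum_distrib_left
    proof (rule sum.cong)
      fix l assume l: "l \<in> {..n - j}"
      have jl: "j + l \<le> n" using j l by auto
      have "wt a n (j + l) * s1 (j + l) j = Kc a (b 1) (c 1) n j * wt (a + 2 * of_nat j) (n - j) l"
        unfolding s1_def Kc_def
        by (rule wt_term[OF jl nz_mono[OF hb] nz_mono[OF hc] nz_mono[OF ha]]) (use jl in auto)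
      thus "wt a n (j + l) * s1 (j + l) j * Rp q a b' c' (j + l) =
          Kc a (b 1) (c 1) n j * Rp q a b' c' j * (wt (a + 2 * of_nat j) (n - j) l * Rp q (a + 2 * of_nat j) (sh b j) (sh c j) l)"
        unfolding Rp_split shb by (simp add: mult_ac)
    qed simp
  qed simp
  finally show ?thesis unfolding b'_def c'_def .
qed

lemma sgn2: "((-1::complex)^j) * (-1)^j = 1" by (induct j) auto

lemma sgn_div: "x / (y * ((-1::complex)^r * z)) = (-1)^r * x / (y * z)"
  by (cases "even r") simp_all

lemma expand_BC:
  assumes D: "P D k \<noteq> 0"
  shows "P B k * P C k / P D k = (\<Sum>j\<le>k. of_nat (k choose j) * P (D - B) j * P (D - C) j * P (B + C - D) (k - j) / P D j)"
proof -
  have sp: "(\<Sum>j\<le>k. of_nat (k choose j) * P (D - B) j * P (D - C) j * P (B + C - D) (k - j) * P (D + of_nat j) (k - j))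
       = P B k * P C k"
    using SP[of k "D - B" "D - C" D] by (simp add: algebra_simps)
  have "(\<Sum>j\<le>k. of_nat (k choose j) * P (D - B) j * P (D - C) j * P (B + C - D) (k - j) / P D j)
      = (\<Sum>j\<le>k. of_nat (k choose j) * P (D - B) j * P (D - C) j * P (B + C - D) (k - j) * P (D + of_nat j) (k - j)) / P D k"
    unfolding sum_divide_distrib
  proof (rule sum.cong)
    fix j assume "j \<in> {..k}"
    hence j: "j \<le> k" by simp
    have e: "P D k = P D j * P (D + of_nat j) (k - j)" using poch_split[OF j] .
    have "P D j \<noteq> 0" "P (D + of_nat j) (k - j) \<noteq> 0" using D unfolding e by auto
    thus "of_nat (k choose j) * P (D - B) j * P (D - C) j * P (B + C - D) (k - j) / P D j =
         of_nat (k choose j) * P (D - B) j * P (D - C) j * P (B + C - D) (k - j) * P (D + of_nat j) (k - j) / P D k"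
      unfolding e by (simp add: field_simps)
  qed simp
  thus ?thesis unfolding sp by simp
qed

lemma Sears:
  fixes A B C D E F :: complex
  assumes bal: "D + E + F = A + B + C + 1 - of_nat n"
    and hD: "P D n \<noteq> 0" and hE: "P E n \<noteq> 0" and hF: "P F n \<noteq> 0"
    and hEA: "P (E - A) n \<noteq> 0" and hFA: "P (F - A) n \<noteq> 0"
  shows "(\<Sum>k\<le>n. P (- of_nat n) k * P A k * P B k * P C k / (fact k * P D k * P E k * P F k))
    = P (E - A) n * P (F - A) n / (P E n * P F n) *
      (\<Sum>j\<le>n. P (- of_nat n) j * P A j * P (D - B) j * P (D - C) j
          / (fact j * P D j * P (1 + A - E - of_nat n) j * P (1 + A - F - of_nat n) j))"
proof -
  define G where "G = (\<lambda>j. P (- of_nat n) j * P A j * P (D - B) j * P (D - C) j / (fact j * P D j * P E j * P F j))"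
  have "(\<Sum>k\<le>n. P (- of_nat n) k * P A k * P B k * P C k / (fact k * P D k * P E k * P F k))
     = (\<Sum>k\<le>n. \<Sum>j\<le>k. P (- of_nat n) k * P A k / (fact k * P E k * P F k) *
          (of_nat (k choose j) * P (D - B) j * P (D - C) j * P (B + C - D) (k - j) / P D j))"
  proof (rule sum.cong)
    fix k assume "k \<in> {..n}"
    hence "P D k \<noteq> 0" using nz_mono[OF hD] by auto
    from expand_BC[OF this, of B C]
    show "P (- of_nat n) k * P A k * P B k * P C k / (fact k * P D k * P E k * P F k) =
      (\<Sum>j\<le>k. P (- of_nat n) k * P A k / (fact k * P E k * P F k) *
          (of_nat (k choose j) * P (D - B) j * P (D - C) j * P (B + C - D) (k - j) / P D j))"
      unfolding sum_distrib_left[symmetric] by (simp add: divide_inverse inverse_mult_distrib mult_ac)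
  qed simp
  also have "\<dots> = (\<Sum>j\<le>n. \<Sum>l\<le>n - j. P (- of_nat n) (j + l) * P A (j + l) / (fact (j + l) * P E (j + l) * P F (j + l)) *
          (of_nat ((j + l) choose j) * P (D - B) j * P (D - C) j * P (B + C - D) (j + l - j) / P D j))"
    by (rule swap_tri)
  also have "\<dots> = (\<Sum>j\<le>n. G j * (\<Sum>l\<le>n - j. P (- of_nat (n - j)) l * P (A + of_nat j) l * P (B + C - D) l
            / (fact l * P (E + of_nat j) l * P (F + of_nat j) l)))"
  proof (rule sum.cong)
    fix j assume j: "j \<in> {..n}"
    show "(\<Sum>l\<le>n - j. P (- of_nat n) (j + l) * P A (j + l) / (fact (j + l) * P E (j + l) * P F (j + l)) *
          (of_nat ((j + l) choose j) * P (D - B) j * P (D - C) j * P (B + C - D) (j + l - j) / P D j))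
        = G j * (\<Sum>l\<le>n - j. P (- of_nat (n - j)) l * P (A + of_nat j) l * P (B + C - D) l
            / (fact l * P (E + of_nat j) l * P (F + of_nat j) l))"
      unfolding sum_distrib_left
    proof (rule sum.cong)
      fix l assume l: "l \<in> {..n - j}"
      have jl: "j + l \<le> n" using j l by auto
      have e1: "P (- of_nat n) (j + l) = P (- of_nat n) j * P (- of_nat (n - j)) l"
        using jl by (simp add: poch_split' of_nat_diff)
      have nzE: "P E j \<noteq> 0" "P (E + of_nat j) l \<noteq> 0"
        using nz_mono[OF hE jl] unfolding poch_split' by auto
      have nzF: "P F j \<noteq> 0" "P (F + of_nat j) l \<noteq> 0"
        using nz_mono[OF hF jl] unfolding poch_split' by auto
      have nzD: "P D j \<noteq> 0" using nz_mono[OF hD] jl by auto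
      have bc: "(of_nat ((j + l) choose j) :: complex) = fact (j + l) / (fact j * fact l)"
        by (subst binom_c) auto
      show "P (- of_nat n) (j + l) * P A (j + l) / (fact (j + l) * P E (j + l) * P F (j + l)) *
          (of_nat ((j + l) choose j) * P (D - B) j * P (D - C) j * P (B + C - D) (j + l - j) / P D j)
        = G j * (P (- of_nat (n - j)) l * P (A + of_nat j) l * P (B + C - D) l
            / (fact l * P (E + of_nat j) l * P (F + of_nat j) l))"
        unfolding e1 poch_split'[of A j l] poch_split'[of E j l] poch_split'[of F j l] bc G_def
        using nzE nzF nzD by (simp add: field_simps)
    qed simp
  qed simp
  also have "\<dots> = (\<Sum>j\<le>n. P (E - A) n * P (F - A) n / (P E n * P F n) *
      (P (- of_nat n) j * P A j * P (D - B) j * P (D - C) j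
          / (fact j * P D j * P (1 + A - E - of_nat n) j * P (1 + A - F - of_nat n) j)))"
  proof (rule sum.cong)
    fix j assume j: "j \<in> {..n}"
    then obtain r where n: "n = j + r" by (auto simp: le_iff_add)
    have nr: "n - j = r" using n by simp
    have sums: "(\<Sum>l\<le>r. P (- of_nat r) l * P (A + of_nat j) l * P (B + C - D) l
            / (fact l * P (E + of_nat j) l * P (1 + (A + of_nat j) + (B + C - D) - (E + of_nat j) - of_nat r) l))
        = P ((E + of_nat j) - (A + of_nat j)) r * P ((E + of_nat j) - (B + C - D)) r
           / (P (E + of_nat j) r * P ((E + of_nat j) - (A + of_nat j) - (B + C - D)) r)"
    proof (rule Saal)
      show "P (E + of_nat j) r \<noteq> 0" using hE unfolding n poch_split' by auto
      have "1 + (A + of_nat j) + (B + C - D) - (E + of_nat j) - of_nat r = F + of_nat j"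
        using bal unfolding n by (simp add: algebra_simps)
      thus "P (1 + (A + of_nat j) + (B + C - D) - (E + of_nat j) - of_nat r) r \<noteq> 0"
        using hF unfolding n poch_split' by auto
    qed
    have f1: "1 + (A + of_nat j) + (B + C - D) - (E + of_nat j) - of_nat r = F + of_nat j"
      using bal unfolding n by (simp add: algebra_simps)
    have f2: "(E + of_nat j) - (B + C - D) = (1 + A - F - of_nat n) + of_nat j"
      using bal unfolding n by (simp add: algebra_simps)
    have f3: "(E + of_nat j) - (A + of_nat j) - (B + C - D) = 1 - F - of_nat n"
      using bal unfolding n by (simp add: algebra_simps)
    have f4: "(E + of_nat j) - (A + of_nat j) = E - A" by simp
    have f3': "E - A - (B + C - D) = 1 - F - of_nat n"
      using bal unfolding n by (simp add: algebra_simps)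
    have p1: "P (1 - F - of_nat n) r = (-1)^r * P (F + of_nat j) r"
      using poch_refl[of F j r] unfolding n by (simp add: algebra_simps)
    have p2: "P (E - A) n = P (E - A) r * ((-1)^j * P (1 + A - E - of_nat n) j)"
      using poch_split'[of "E - A" r j] poch_refl[of "E - A" r j] unfolding n
      by (simp add: algebra_simps)
    have p3: "P (F - A) n = (-1)^n * (P (1 + A - F - of_nat n) j * P ((1 + A - F - of_nat n) + of_nat j) r)"
      using poch_refl[of "F - A" 0 n] poch_split'[of "1 + A - F - of_nat n" j r] unfolding n
      by (simp add: algebra_simps)
    have p4: "P E n = P E j * P (E + of_nat j) r" "P F n = P F j * P (F + of_nat j) r"
      unfolding n by (rule poch_split')+
    have nz: "P E j \<noteq> 0" "P (E + of_nat j) r \<noteq> 0" "P F j \<noteq> 0" "P (F + of_nat j) r \<noteq> 0"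
      "P (1 + A - E - of_nat n) j \<noteq> 0" "P (1 + A - F - of_nat n) j \<noteq> 0"
      using hE hF hEA hFA unfolding p2 p3 p4 by auto
    have sums': "(\<Sum>l\<le>r. P (- of_nat r) l * P (A + of_nat j) l * P (B + C - D) l
            / (fact l * P (E + of_nat j) l * P (F + of_nat j) l))
       = (-1)^r * (P (E - A) r * P ((1 + A - F - of_nat n) + of_nat j) r) / (P (E + of_nat j) r * P (F + of_nat j) r)"
      using sums unfolding f1 f2 f3 f4 f3' p1 sgn_div .
    have sg: "((-1::complex)^n) = (-1)^r * (-1)^j" unfolding n by (simp add: power_add)
    show "G j * (\<Sum>l\<le>n - j. P (- of_nat (n - j)) l * P (A + of_nat j) l * P (B + C - D) l
            / (fact l * P (E + of_nat j) l * P (F + of_nat j) l))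
      = P (E - A) n * P (F - A) n / (P E n * P F n) *
      (P (- of_nat n) j * P A j * P (D - B) j * P (D - C) j
          / (fact j * P D j * P (1 + A - E - of_nat n) j * P (1 + A - F - of_nat n) j))"
      unfolding nr sums'
      unfolding p2 p3 p4 G_def sg using nz sgn2[of j] sgn2[of r]
      by (simp add: field_simps)
  qed simp
  also have "\<dots> = P (E - A) n * P (F - A) n / (P E n * P F n) *
      (\<Sum>j\<le>n. P (- of_nat n) j * P A j * P (D - B) j * P (D - C) j
          / (fact j * P D j * P (1 + A - E - of_nat n) j * P (1 + A - F - of_nat n) j))"
    by (simp add: sum_distrib_left)
  finally show ?thesis .
qed

lemma wt_partial:
  assumes "K \<le> n" and ha: "P (1 + a + of_nat n) n \<noteq> 0"
  shows "(\<Sum>k\<le>K. wt a n k) = P a (Suc K) * P (1 - of_nat n) K / (fact K * P (1 + a + of_nat n) K)"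
  using assms(1)
proof (induction K)
  case 0
  then show ?case by (simp add: wt_def)
next
  case (Suc K)
  define x where "x = (of_nat K :: complex)"
  define N where "N = (of_nat n :: complex)"
  define pa where "pa = P a (Suc K)"
  define pn where "pn = P (1 - N) K"
  define pA where "pA = P (1 + a + N) K"
  define fK where "fK = (fact K :: complex)"
  have nz: "1 + a + N + x \<noteq> 0" "pA \<noteq> 0"
    using nz_mono[OF ha, of "Suc K"] Suc.prems by (auto simp: pochhammer_Suc pA_def N_def x_def)
  have f: "fK \<noteq> 0" "x + 1 \<noteq> 0"
    unfolding fK_def x_def by simp (metis of_nat_Suc of_nat_eq_0_iff add.commute nat.distinct(1))
  have e1: "P a (Suc (Suc K)) = pa * (a + x + 1)" by (simp add: pochhammer_Suc pa_def x_def)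
  have e2: "P (- of_nat n) (Suc K) = - N * pn"
    by (simp add: pochhammer_rec algebra_simps pn_def N_def)
  have e3: "P (1 - of_nat n) (Suc K) = pn * (1 - N + x)" by (simp add: pochhammer_Suc pn_def N_def x_def)
  have e4: "P (1 + a + of_nat n) (Suc K) = pA * (1 + a + N + x)" by (simp add: pochhammer_Suc pA_def N_def x_def)
  have e5: "(fact (Suc K) :: complex) = (x + 1) * fK" by (simp add: fK_def x_def fact_Suc)
  have e6: "(of_nat (Suc K) :: complex) = x + 1" by (simp add: x_def)
  have "(\<Sum>k\<le>Suc K. wt a n k) = P a (Suc K) * P (1 - of_nat n) K / (fact K * P (1 + a + of_nat n) K) + wt a n (Suc K)"
    using Suc by simp
  also have "\<dots> = P a (Suc (Suc K)) * P (1 - of_nat n) (Suc K) / (fact (Suc K) * P (1 + a + of_nat n) (Suc K))"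
  proof -
    have g: "\<And>X Y v w::complex. v \<noteq> 0 \<Longrightarrow> w \<noteq> 0 \<Longrightarrow> X / v + Y / (v * w) = (X * w + Y) / (v * w)"
      by (simp add: field_simps)
    have "pa * pn / (fK * pA) + pa * (a + 2 * (x + 1)) * (- N * pn) / ((x + 1) * fK * (pA * (1 + a + N + x)))
        = pa * pn / (fK * pA) + pa * (a + 2 * (x + 1)) * (- N * pn) / ((fK * pA) * ((x + 1) * (1 + a + N + x)))"
      by (simp add: mult_ac)
    also have "\<dots> = (pa * pn * ((x + 1) * (1 + a + N + x)) + pa * (a + 2 * (x + 1)) * (- N * pn)) / ((fK * pA) * ((x + 1) * (1 + a + N + x)))"
      by (rule g) (use nz f in auto)
    also have "pa * pn * ((x + 1) * (1 + a + N + x)) + pa * (a + 2 * (x + 1)) * (- N * pn) = pa * (a + x + 1) * (pn * (1 - N + x))"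
      by (simp add: algebra_simps)
    also have "(fK * pA) * ((x + 1) * (1 + a + N + x)) = (x + 1) * fK * (pA * (1 + a + N + x))"
      by (simp add: mult_ac)
    finally have *: "pa * pn / (fK * pA) + pa * (a + 2 * (x + 1)) * (- N * pn) / ((x + 1) * fK * (pA * (1 + a + N + x)))
       = pa * (a + x + 1) * (pn * (1 - N + x)) / ((x + 1) * fK * (pA * (1 + a + N + x)))" .
    show ?thesis unfolding wt_def e1 e2 e3 e4 e5 e6 unfolding pa_def[symmetric] pn_def[symmetric] pA_def[symmetric] fK_def[symmetric] N_def[symmetric]
      by (rule *)
  qed
  finally show ?case .
qed

lemma Fq0:
  assumes ha: "P (1 + a + of_nat n) n \<noteq> 0"
  shows "Fq 0 a b c n = (if n = 0 then a else 0)"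
proof (cases n)
  case 0
  then show ?thesis by (simp add: Fq_def Rp_def wt_def)
next
  case (Suc m)
  have "Fq 0 a b c n = (\<Sum>k\<le>n. wt a n k)" by (simp add: Fq_def Rp_def)
  also have "\<dots> = P a (Suc n) * P (1 - of_nat n) n / (fact n * P (1 + a + of_nat n) n)"
    by (rule wt_partial[OF _ ha]) simp
  also have "P (1 - of_nat n) n = 0"
    unfolding pochhammer_eq_0_iff using Suc by (intro exI[of _ "n - 1"]) (auto simp: of_nat_diff)
  finally show ?thesis using Suc by simp
qed

lemma Fq1:
  assumes hb: "P (1 + a - b 1) n \<noteq> 0" and hc: "P (1 + a - c 1) n \<noteq> 0"
    and ha: "P (1 + a + of_nat n) n \<noteq> 0"
  shows "Fq 1 a b c n = Kc a (b 1) (c 1) n n * (a + 2 * of_nat n)"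
proof -
  have "Fq (Suc 0) a b c n = (\<Sum>j\<le>n. Kc a (b 1) (c 1) n j * Rp 0 a (\<lambda>r. b (Suc r)) (\<lambda>r. c (Suc r)) j
            * Fq 0 (a + 2 * of_nat j) (sh b j) (sh c j) (n - j))"
    by (rule peel[where a=a and b=b and c=c and n=n, OF hb hc ha])
  also have "\<dots> = (\<Sum>j\<le>n. if j = n then Kc a (b 1) (c 1) n n * (a + 2 * of_nat n) else 0)"
  proof (rule sum.cong)
    fix j assume "j \<in> {..n}"
    hence j: "j \<le> n" by simp
    have "P (1 + a + of_nat n) n = P (1 + a + of_nat n) j * P (1 + (a + 2 * of_nat j) + of_nat (n - j)) (n - j)"
      using poch_split[OF j, of "1 + a + of_nat n"] j by (simp add: of_nat_diff algebra_simps)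
    hence "P (1 + (a + 2 * of_nat j) + of_nat (n - j)) (n - j) \<noteq> 0" using ha by auto
    from Fq0[OF this] j show "Kc a (b 1) (c 1) n j * Rp 0 a (\<lambda>r. b (Suc r)) (\<lambda>r. c (Suc r)) j
            * Fq 0 (a + 2 * of_nat j) (sh b j) (sh c j) (n - j) = (if j = n then Kc a (b 1) (c 1) n n * (a + 2 * of_nat n) else 0)"
      by (auto simp: Rp_def)
  qed simp
  also have "\<dots> = Kc a (b 1) (c 1) n n * (a + 2 * of_nat n)" by simp
  finally show ?thesis by simp
qed

lemma poch_2n: "(a + 2 * of_nat n) * P a (2 * n) = a * P (1 + a) n * P (1 + a + of_nat n) n"
proof -
  have "(a + 2 * of_nat n) * P a (2 * n) = P a (Suc (2 * n))" by (simp add: pochhammer_Suc)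
  also have "\<dots> = a * P (a + 1) (n + n)" by (simp add: pochhammer_rec mult_2)
  also have "\<dots> = a * P (1 + a) n * P (1 + a + of_nat n) n" by (simp add: poch_split' add.commute)
  finally show ?thesis .
qed

lemma whip_term:
  assumes n: "n = j + r"
    and h1: "P (1 + a - b1) j \<noteq> 0" and h2: "P (1 + a - c1) j \<noteq> 0"
    and h3: "P (1 + a - b2) n \<noteq> 0" and h4: "P (1 + a - c2) n \<noteq> 0"
    and h5: "P (1 + a + of_nat n) n \<noteq> 0" and h6: "P (b2 + c2 - a - of_nat n) n \<noteq> 0"
  shows "Kc a b1 c1 n j * Rt a b2 c2 j * (Kc (a + 2 * of_nat j) (b2 + of_nat j) (c2 + of_nat j) r r * (a + 2 * of_nat j + 2 * of_nat r))
    = a * P (1 + a) n * P (1 + a - b2 - c2) n / (P (1 + a - b2) n * P (1 + a - c2) n) *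
      (P (- of_nat n) j * P c2 j * P b2 j * P (1 + a - b1 - c1) j
        / (fact j * P (b2 + c2 - a - of_nat n) j * P (1 + a - b1) j * P (1 + a - c1) j))"
proof -
  have q1: "1 + (a + 2 * of_nat j) - (b2 + of_nat j) - (c2 + of_nat j) = 1 + a - b2 - c2" by simp
  have q2: "1 + (a + 2 * of_nat j) - (b2 + of_nat j) = (1 + a - b2) + of_nat j" by simp
  have q3: "1 + (a + 2 * of_nat j) - (c2 + of_nat j) = (1 + a - c2) + of_nat j" by simp
  have q4: "1 + (a + 2 * of_nat j) + of_nat r = (1 + a + of_nat n) + of_nat j" using n by simp
  have q5: "P (- of_nat r) r * (-1)^r = fact r" using sgn2[of r] by (simp add: pochhammer_same mult_ac)
  have i1: "P (1 + a - b2) n = P (1 + a - b2) j * P ((1 + a - b2) + of_nat j) r" unfolding n by (rule poch_split')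
  have i2: "P (1 + a - c2) n = P (1 + a - c2) j * P ((1 + a - c2) + of_nat j) r" unfolding n by (rule poch_split')
  have i3: "P (1 + a + of_nat n) n = P (1 + a + of_nat n) j * P ((1 + a + of_nat n) + of_nat j) r" 
    using poch_split'[of "1 + a + of_nat n" j r] n by simp
  have i5: "P (1 + a - b2 - c2) n = P (1 + a - b2 - c2) r * ((-1)^j * P (b2 + c2 - a - of_nat n) j)"
    using poch_split'[of "1 + a - b2 - c2" r j] poch_refl[of "1 + a - b2 - c2" r j] n
    by (simp add: add.commute algebra_simps)
  have i6: "a * P (1 + a) n = (a + 2 * of_nat n) * P a (2 * j) * P (a + 2 * of_nat j) (2 * r)
             / (P (1 + a + of_nat n) j * P ((1 + a + of_nat n) + of_nat j) r)"
  proof -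
    have "P a (2 * n) = P a (2 * j) * P (a + 2 * of_nat j) (2 * r)"
      unfolding n using poch_split'[of a "2 * j" "2 * r"] by (simp add: algebra_simps)
    with poch_2n[of a n] h5 i3 show ?thesis by (simp add: field_simps)
  qed
  have nz: "P (1 + a - b2) j \<noteq> 0" "P ((1 + a - b2) + of_nat j) r \<noteq> 0"
    "P (1 + a - c2) j \<noteq> 0" "P ((1 + a - c2) + of_nat j) r \<noteq> 0"
    "P (1 + a + of_nat n) j \<noteq> 0" "P ((1 + a + of_nat n) + of_nat j) r \<noteq> 0"
    using h3 h4 h5 unfolding i1 i2 i3 by auto
  have nz2: "P (b2 + c2 - a - of_nat n) j \<noteq> 0" using nz_mono[OF h6] n by simp
  have f: "(fact j :: complex) \<noteq> 0" "(fact r :: complex) \<noteq> 0" by auto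
  have nn: "a + 2 * of_nat j + 2 * of_nat r = a + 2 * of_nat n" using n by simp
  have e: "Kc a b1 c1 n j * Rt a b2 c2 j * (Kc (a + 2 * of_nat j) (b2 + of_nat j) (c2 + of_nat j) r r * (a + 2 * of_nat j + 2 * of_nat r))
    = P (1 + a - b1 - c1) j / (fact j * P (1 + a - b1) j * P (1 + a - c1) j)
     * (P a (2 * j) * P (- of_nat n) j * (-1)^j / P (1 + a + of_nat n) j)
     * (P b2 j * P c2 j / (P (1 + a - b2) j * P (1 + a - c2) j))
     * (P (1 + a - b2 - c2) r / (fact r * P ((1 + a - b2) + of_nat j) r * P ((1 + a - c2) + of_nat j) r)
     * (P (a + 2 * of_nat j) (2 * r) * (P (- of_nat r) r * (-1)^r) / P ((1 + a + of_nat n) + of_nat j) r))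
     * (a + 2 * of_nat n)"
    unfolding Kc_def Rt_def q1 q2 q3 q4 nn by (simp add: mult_ac)
  show ?thesis
    unfolding e q5 i6 i1 i2 i5
    using nz nz2 f h1 h2 sgn2[of j]
    apply (simp only: divide_inverse inverse_mult_distrib)
    by (simp add: field_simps)
qed

lemma nz_shift: "P x n \<noteq> 0 \<Longrightarrow> j \<le> n \<Longrightarrow> P (x + of_nat j) (n - j) \<noteq> 0"
  using poch_split[of j n x] by auto

lemma Fq2_whip:
  assumes hb1: "P (1 + a - b 1) n \<noteq> 0" and hc1: "P (1 + a - c 1) n \<noteq> 0"
    and hb2: "P (1 + a - b 2) n \<noteq> 0" and hc2: "P (1 + a - c 2) n \<noteq> 0"
    and ha: "P (1 + a + of_nat n) n \<noteq> 0" and hX2: "P (b 2 + c 2 - a - of_nat n) n \<noteq> 0"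
  shows "Fq 2 a b c n = a * P (1 + a) n * P (1 + a - b 2 - c 2) n / (P (1 + a - b 2) n * P (1 + a - c 2) n) *
      (\<Sum>j\<le>n. P (- of_nat n) j * P (c 2) j * P (b 2) j * P (1 + a - b 1 - c 1) j
        / (fact j * P (b 2 + c 2 - a - of_nat n) j * P (1 + a - b 1) j * P (1 + a - c 1) j))"
proof -
  have "Fq (Suc 1) a b c n = (\<Sum>j\<le>n. Kc a (b 1) (c 1) n j * Rp 1 a (\<lambda>r. b (Suc r)) (\<lambda>r. c (Suc r)) j
            * Fq 1 (a + 2 * of_nat j) (sh b j) (sh c j) (n - j))"
    by (rule peel[where a=a and b=b and c=c and n=n, OF hb1 hc1 ha])
  also have "\<dots> = (\<Sum>j\<le>n. a * P (1 + a) n * P (1 + a - b 2 - c 2) n / (P (1 + a - b 2) n * P (1 + a - c 2) n) *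
      (P (- of_nat n) j * P (c 2) j * P (b 2) j * P (1 + a - b 1 - c 1) j
        / (fact j * P (b 2 + c 2 - a - of_nat n) j * P (1 + a - b 1) j * P (1 + a - c 1) j)))"
  proof (rule sum.cong)
    fix j assume "j \<in> {..n}"
    hence j: "j \<le> n" by simp
    define r where "r = n - j"
    have n: "n = j + r" using j r_def by simp
    have s1: "sh b j 1 = b 2 + of_nat j" "sh c j 1 = c 2 + of_nat j" by (simp_all add: sh_def numeral_2_eq_2)
    have e1: "1 + (a + 2 * of_nat j) - (b 2 + of_nat j) = (1 + a - b 2) + of_nat j" by simp
    have e2: "1 + (a + 2 * of_nat j) - (c 2 + of_nat j) = (1 + a - c 2) + of_nat j" by simp
    have e3: "1 + (a + 2 * of_nat j) + of_nat r = (1 + a + of_nat n) + of_nat j" using n by simp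
    have hh: "P ((1 + a - b 2) + of_nat j) r \<noteq> 0" "P ((1 + a - c 2) + of_nat j) r \<noteq> 0"
      "P ((1 + a + of_nat n) + of_nat j) r \<noteq> 0"
      using nz_shift[OF hb2 j] nz_shift[OF hc2 j] nz_shift[OF ha j] unfolding r_def by auto
    have F1: "Fq 1 (a + 2 * of_nat j) (sh b j) (sh c j) r = Kc (a + 2 * of_nat j) (sh b j 1) (sh c j 1) r r * (a + 2 * of_nat j + 2 * of_nat r)"
      by (rule Fq1) (unfold s1 e1 e2 e3, use hh in auto)
    have R1: "Rp 1 a (\<lambda>r. b (Suc r)) (\<lambda>r. c (Suc r)) j = Rt a (b 2) (c 2) j"
      by (simp add: Rp_def numeral_2_eq_2)
    have w: "Kc a (b 1) (c 1) n j * Rt a (b 2) (c 2) j * (Kc (a + 2 * of_nat j) (b 2 + of_nat j) (c 2 + of_nat j) r r * (a + 2 * of_nat j + 2 * of_nat r))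
      = a * P (1 + a) n * P (1 + a - b 2 - c 2) n / (P (1 + a - b 2) n * P (1 + a - c 2) n) *
      (P (- of_nat n) j * P (c 2) j * P (b 2) j * P (1 + a - b 1 - c 1) j
        / (fact j * P (b 2 + c 2 - a - of_nat n) j * P (1 + a - b 1) j * P (1 + a - c 1) j))"
      by (intro whip_term[OF n] nz_mono[OF hb1] nz_mono[OF hc1] hb2 hc2 ha hX2) (use j in auto)
    show "Kc a (b 1) (c 1) n j * Rp 1 a (\<lambda>r. b (Suc r)) (\<lambda>r. c (Suc r)) j
            * Fq 1 (a + 2 * of_nat j) (sh b j) (sh c j) (n - j) = a * P (1 + a) n * P (1 + a - b 2 - c 2) n / (P (1 + a - b 2) n * P (1 + a - c 2) n) *
      (P (- of_nat n) j * P (c 2) j * P (b 2) j * P (1 + a - b 1 - c 1) j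
        / (fact j * P (b 2 + c 2 - a - of_nat n) j * P (1 + a - b 1) j * P (1 + a - c 1) j))"
      unfolding r_def[symmetric] F1 R1 s1 using w by simp
  qed simp
  finally show ?thesis by (simp add: sum_distrib_left numeral_2_eq_2)
qed

definition pre :: "nat \<Rightarrow> complex \<Rightarrow> (nat \<Rightarrow> complex) \<Rightarrow> (nat \<Rightarrow> complex) \<Rightarrow> nat \<Rightarrow> complex" where
  "pre m a b c n = (pochhammer (1 + a) n * pochhammer (1 + a - b m - c (m+1)) n
        * pochhammer (1 + a - b (m+1) - c (m+1)) n * pochhammer (1 + a - c m - c (m+1)) n)
      / (pochhammer (1 + a - b m) n * pochhammer (1 + a - b (m+1)) n
        * pochhammer (1 + a - c m) n * pochhammer (1 + a - c (m+1)) n)"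

definition tm :: "nat \<Rightarrow> complex \<Rightarrow> (nat \<Rightarrow> complex) \<Rightarrow> (nat \<Rightarrow> complex) \<Rightarrow> nat \<Rightarrow> (nat \<Rightarrow> nat) \<Rightarrow> complex" where
  "tm m a b c n i = (pochhammer (- of_nat n) (i m) * pochhammer (c (m+1)) (i m))
            / (pochhammer (- a - of_nat n + b m + c (m+1)) (i m)
               * pochhammer (- a - of_nat n + b (m+1) + c (m+1)) (i m))
          * (pochhammer (- 1 - 2 * a - of_nat n + b m + b (m+1) + c m + c (m+1)) (i m)
             * pochhammer (- a - of_nat n + c (m+1)) (i m - i (m-1))
             * pochhammer (b (m+1)) (i (m-1)))
            / (pochhammer (- a - of_nat n + c m + c (m+1)) (i m)
               * fact (i m - i (m-1))
               * pochhammer (- 1 - 2 * a - of_nat n + b m + b (m+1) + c m + c (m+1)) (i (m-1)))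
          * (\<Prod>k=1..m-1.
              (pochhammer (1 + a - b k - c k) (i k - i (k-1))
               * pochhammer (b (k+1)) (i k) * pochhammer (c (k+1)) (i k))
              / (fact (i k - i (k-1)) * pochhammer (1 + a - b k) (i k)
                 * pochhammer (1 + a - c k) (i k)))"

definition ch1 :: "nat \<Rightarrow> nat \<Rightarrow> nat" where "ch1 j = (\<lambda>k. if k = 1 then j else 0)"

lemma chains1: "chains 1 n = ch1 ` {..n}"
proof
  show "chains 1 n \<subseteq> ch1 ` {..n}"
  proof
    fix i assume "i \<in> chains 1 n"
    hence i: "i 0 = 0" "\<forall>k>1. i k = 0" "i 1 \<le> n" by (auto simp: chains_def)
    have "i = ch1 (i 1)"
    proof
      fix k show "i k = ch1 (i 1) k" using i by (cases k) (auto simp: ch1_def)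
    qed
    thus "i \<in> ch1 ` {..n}" using i by auto
  qed
  show "ch1 ` {..n} \<subseteq> chains 1 n" by (auto simp: chains_def ch1_def)
qed

lemma inj_ch1: "inj ch1"
  by (rule injI) (metis ch1_def)

lemma poch_negflip: "P (x - of_nat n) n = (-1)^n * P (1 - x) n"
  using poch_refl[of "x - of_nat n" 0 n] by (simp add: algebra_simps)

lemma tm1: "tm 1 a b c n (ch1 j) = (P (- of_nat n) j * P (c 2) j) / (P (- a - of_nat n + b 1 + c 2) j * P (- a - of_nat n + b 2 + c 2) j)
   * (P (- 1 - 2 * a - of_nat n + b 1 + b 2 + c 1 + c 2) j * P (- a - of_nat n + c 2) j) / (P (- a - of_nat n + c 1 + c 2) j * fact j)"
proof -
  have t: "(1::nat) + 1 = 2" "(1::nat) - 1 = 0" by simp_all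
  have u: "ch1 j 1 = j" "ch1 j 0 = 0" by (simp_all add: ch1_def)
  show ?thesis unfolding tm_def t u by simp
qed

lemma pre1: "pre 1 a b c n = (P (1 + a) n * P (1 + a - b 1 - c 2) n * P (1 + a - b 2 - c 2) n * P (1 + a - c 1 - c 2) n)
      / (P (1 + a - b 1) n * P (1 + a - b 2) n * P (1 + a - c 1) n * P (1 + a - c 2) n)"
proof -
  have t: "(1::nat) + 1 = 2" by simp
  show ?thesis unfolding pre_def t ..
qed

lemma base1:
  assumes hb1: "P (1 + a - b 1) n \<noteq> 0" and hc1: "P (1 + a - c 1) n \<noteq> 0"
    and hb2: "P (1 + a - b 2) n \<noteq> 0" and hc2: "P (1 + a - c 2) n \<noteq> 0"
    and ha: "P (1 + a + of_nat n) n \<noteq> 0"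
    and hX1: "P (- a - of_nat n + b 1 + c 2) n \<noteq> 0"
    and hX2: "P (- a - of_nat n + b 2 + c 2) n \<noteq> 0"
    and hX3: "P (- a - of_nat n + c 1 + c 2) n \<noteq> 0"
  shows "Fq 2 a b c n = a * (pre 1 a b c n * (\<Sum>i\<in>chains 1 n. tm 1 a b c n i))"
proof -
  define A where "A = c 2"
  define B where "B = b 2"
  define C where "C = 1 + a - b 1 - c 1"
  define D where "D = b 2 + c 2 - a - of_nat n"
  define E where "E = 1 + a - b 1"
  define F where "F = 1 + a - c 1"
  have d1: "D - B = - a - of_nat n + c 2" unfolding D_def B_def by simp
  have d2: "D - C = - 1 - 2 * a - of_nat n + b 1 + b 2 + c 1 + c 2" unfolding D_def C_def by simp
  have d3: "1 + A - E - of_nat n = - a - of_nat n + b 1 + c 2" unfolding A_def E_def by simp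
  have d4: "1 + A - F - of_nat n = - a - of_nat n + c 1 + c 2" unfolding A_def F_def by simp
  have d5: "D = - a - of_nat n + b 2 + c 2" unfolding D_def by simp
  have d6: "E - A = 1 + a - b 1 - c 2" "F - A = 1 + a - c 1 - c 2" unfolding E_def F_def A_def by simp_all
  have hEA: "P (E - A) n \<noteq> 0"
    using hX1 poch_negflip[of "b 1 + c 2 - a" n] unfolding d6 by (simp add: algebra_simps)
  have hFA: "P (F - A) n \<noteq> 0"
    using hX3 poch_negflip[of "c 1 + c 2 - a" n] unfolding d6 by (simp add: algebra_simps)
  have hD: "P D n \<noteq> 0" using hX2 unfolding d5 .
  have hE: "P E n \<noteq> 0" unfolding E_def by (rule hb1)
  have hF: "P F n \<noteq> 0" unfolding F_def by (rule hc1)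
  have bal: "D + E + F = A + B + C + 1 - of_nat n" unfolding A_def B_def C_def D_def E_def F_def by simp
  have "Fq 2 a b c n = a * P (1 + a) n * P (1 + a - b 2 - c 2) n / (P (1 + a - b 2) n * P (1 + a - c 2) n) *
      (\<Sum>k\<le>n. P (- of_nat n) k * P A k * P B k * P C k / (fact k * P D k * P E k * P F k))"
    unfolding A_def B_def C_def D_def E_def F_def
    by (rule Fq2_whip[OF hb1 hc1 hb2 hc2 ha]) (use hD in \<open>simp add: D_def\<close>)
  also have "(\<Sum>k\<le>n. P (- of_nat n) k * P A k * P B k * P C k / (fact k * P D k * P E k * P F k))
    = P (E - A) n * P (F - A) n / (P E n * P F n) *
      (\<Sum>j\<le>n. P (- of_nat n) j * P A j * P (D - B) j * P (D - C) j
          / (fact j * P D j * P (1 + A - E - of_nat n) j * P (1 + A - F - of_nat n) j))"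
    by (rule Sears[OF bal hD hE hF hEA hFA])
  also have "(\<Sum>j\<le>n. P (- of_nat n) j * P A j * P (D - B) j * P (D - C) j
          / (fact j * P D j * P (1 + A - E - of_nat n) j * P (1 + A - F - of_nat n) j))
     = (\<Sum>i\<in>chains 1 n. tm 1 a b c n i)"
    unfolding chains1 sum.reindex[OF inj_on_subset[OF inj_ch1 subset_UNIV]] o_def tm1
    unfolding d1 d2 d3 d4 unfolding d5 A_def
    by (rule sum.cong) (simp_all add: divide_inverse inverse_mult_distrib mult_ac)
  finally show ?thesis
    unfolding pre1 d6 unfolding E_def F_def A_def by (simp add: divide_inverse inverse_mult_distrib mult_ac)
qed

lemma chains_mono:
  assumes "i \<in> chains m n" "k \<le> l" "l \<le> m"
  shows "i k \<le> i l"
  using assms(2,3)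
proof (induction l)
  case 0
  then show ?case by simp
next
  case (Suc l)
  show ?case
  proof (cases "k = Suc l")
    case True then show ?thesis by simp
  next
    case False
    hence "i k \<le> i l" using Suc by auto
    also have "i l \<le> i (Suc l)" using assms(1) Suc.prems unfolding chains_def by force
    finally show ?thesis .
  qed
qed

lemma chains_le: "i \<in> chains m n \<Longrightarrow> i k \<le> n"
proof (cases "k \<le> m")
  case True
  assume i: "i \<in> chains m n"
  hence "i k \<le> i m" using chains_mono[OF i True] by simp
  also have "i m \<le> n" using i by (simp add: chains_def)
  finally show ?thesis .
next
  case False
  assume "i \<in> chains m n"
  thus ?thesis using False by (simp add: chains_def)
qed

lemma finite_chains: "finite (chains m n)"
proof -
  let ?f = "\<lambda>i. map i [0..<Suc m]"
  have "?f ` chains m n \<subseteq> {xs. set xs \<subseteq> {..n} \<and> length xs = Suc m}"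
    using chains_le by auto
  hence "finite (?f ` chains m n)"
    by (rule finite_subset) (rule finite_lists_length_eq, simp)
  moreover have "inj_on ?f (chains m n)"
  proof (rule inj_onI)
    fix i i' assume i: "i \<in> chains m n" and i': "i' \<in> chains m n" and eq: "?f i = ?f i'"
    show "i = i'"
    proof
      fix k show "i k = i' k"
      proof (cases "k \<le> m")
        case True
        have "?f i ! k = ?f i' ! k" by (simp only: eq)
        moreover have "?f i ! k = i k" "?f i' ! k = i' k" using True by (simp_all del: upt_Suc add: nth_map_upt)
        ultimately show ?thesis by simp
      next
        case False thus ?thesis using i i' by (simp add: chains_def)
      qed
    qed
  qed
  ultimately show ?thesis by (rule finite_imageD)
qed

definition glue :: "nat \<Rightarrow> nat \<Rightarrow> (nat \<Rightarrow> nat) \<Rightarrow> nat \<Rightarrow> nat" where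
  "glue m j i' = (\<lambda>k. if k = 0 then 0 else if k \<le> Suc m then j + i' (k - 1) else 0)"

definition unglue :: "nat \<Rightarrow> (nat \<Rightarrow> nat) \<Rightarrow> nat \<Rightarrow> nat" where
  "unglue m i = (\<lambda>k. if k \<le> m then i (Suc k) - i 1 else 0)"

lemma glue_unglue:
  assumes i: "i \<in> chains (Suc m) n"
  shows "glue m (i 1) (unglue m i) = i"
proof -
    have i0: "i 0 = 0" using i by (simp add: chains_def)
    have mono: "\<And>k l. k \<le> l \<Longrightarrow> l \<le> Suc m \<Longrightarrow> i k \<le> i l" using chains_mono[OF i] by blast
    show ?thesis
    proof
      fix k
      show "glue m (i 1) (unglue m i) k = i k"
      proof (cases "k = 0")
        case True thus ?thesis using i0 by (simp add: glue_def)
      next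
        case False
        show ?thesis
        proof (cases "k \<le> Suc m")
          case True
          have "i 1 \<le> i k" using mono[of 1 k] True False by simp
          moreover have "k - 1 \<le> m" "Suc (k - 1) = k" using True False by auto
          ultimately show ?thesis using True False by (simp add: glue_def unglue_def)
        next
          case False2: False
          thus ?thesis using i False by (simp add: glue_def chains_def)
        qed
      qed
    qed
qed

lemma chains_Suc_sum:
  "(\<Sum>i\<in>chains (Suc m) n. f i) = (\<Sum>j\<le>n. \<Sum>i'\<in>chains m (n - j). f (glue m j i'))"
proof -
  have "(\<Sum>i\<in>chains (Suc m) n. f i) = (\<Sum>(j, i')\<in>Sigma {..n} (\<lambda>j. chains m (n - j)). f (glue m j i'))"
  proof (rule sum.reindex_bij_witness[where j = "\<lambda>i. (i 1, unglue m i)" and i = "\<lambda>(j, i'). glue m j i'"])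
    fix i assume i: "i \<in> chains (Suc m) n"
    have mono: "\<And>k l. k \<le> l \<Longrightarrow> l \<le> Suc m \<Longrightarrow> i k \<le> i l" using chains_mono[OF i] by blast
    show "(case (i 1, unglue m i) of (j, i') \<Rightarrow> glue m j i') = i" using glue_unglue[OF i] by simp
    have i1: "i 1 \<le> n" using chains_le[OF i] .
    have "unglue m i \<in> chains m (n - i 1)"
      unfolding chains_def unglue_def
    proof (intro CollectI conjI ballI allI impI)
      show "(if 0 \<le> m then i (Suc 0) - i 1 else 0) = 0" by simp
    next
      fix k assume "m < k" thus "(if k \<le> m then i (Suc k) - i 1 else 0) = 0" by simp
    next
      fix k assume k: "k \<in> {1..m}"
      show "(if k - 1 \<le> m then i (Suc (k - 1)) - i 1 else 0) \<le> (if k \<le> m then i (Suc k) - i 1 else 0)"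
        using k mono[of "Suc (k - 1)" "Suc k"] by auto
    next
      show "(if m \<le> m then i (Suc m) - i 1 else 0) \<le> n - i 1"
        using i by (simp add: chains_def diff_le_mono)
    qed
    thus "(i 1, unglue m i) \<in> Sigma {..n} (\<lambda>j. chains m (n - j))" using i1 by simp
  next
    fix p assume p: "p \<in> Sigma {..n} (\<lambda>j. chains m (n - j))"
    then obtain j i' where p: "p = (j, i')" and j: "j \<le> n" and i': "i' \<in> chains m (n - j)" by auto
    have i'0: "i' 0 = 0" and i'z: "\<And>k. k > m \<Longrightarrow> i' k = 0" using i' by (auto simp: chains_def)
    show "((case p of (j, i') \<Rightarrow> glue m j i') 1, unglue m (case p of (j, i') \<Rightarrow> glue m j i')) = p"
    proof -
      have "unglue m (glue m j i') = i'"
      proof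
        fix k show "unglue m (glue m j i') k = i' k"
          using i'z[of k] i'0 by (simp add: glue_def unglue_def)
      qed
      thus ?thesis using i'0 unfolding p by (simp add: glue_def)
    qed
    have mono': "\<And>k. k \<in> {1..m} \<Longrightarrow> i' (k - 1) \<le> i' k" using i' by (simp add: chains_def)
    have g1: "glue m j i' 0 = 0" by (simp add: glue_def)
    have g2: "\<forall>k>Suc m. glue m j i' k = 0" by (simp add: glue_def)
    have g3: "\<forall>k\<in>{1..Suc m}. glue m j i' (k - 1) \<le> glue m j i' k"
    proof
      fix k assume k: "k \<in> {1..Suc m}"
      show "glue m j i' (k - 1) \<le> glue m j i' k"
      proof (cases "k = 1")
        case True thus ?thesis by (simp add: glue_def)
      next
        case False
        hence k1: "k - 1 \<in> {1..m}" using k by auto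
        have "i' (k - 1 - 1) \<le> i' (k - 1)" using mono'[OF k1] .
        moreover have "k - 1 \<noteq> 0" "k - 1 \<le> Suc m" "k \<noteq> 0" "k \<le> Suc m" using k False by auto
        ultimately show ?thesis unfolding glue_def by simp
      qed
    qed
    have g4: "glue m j i' (Suc m) \<le> n" using i' j by (auto simp add: glue_def chains_def)
    show "(case p of (j, i') \<Rightarrow> glue m j i') \<in> chains (Suc m) n"
      unfolding p chains_def using g1 g2 g3 g4 by simp
  qed (simp add: glue_unglue[unfolded One_nat_def])
  also have "\<dots> = (\<Sum>j\<le>n. \<Sum>i'\<in>chains m (n - j). f (glue m j i'))"
    by (subst sum.Sigma) (auto simp: finite_chains)
  finally show ?thesis .
qed

definition Lt :: "nat \<Rightarrow> complex \<Rightarrow> (nat \<Rightarrow> complex) \<Rightarrow> (nat \<Rightarrow> complex) \<Rightarrow> nat \<Rightarrow> (nat \<Rightarrow> nat) \<Rightarrow> complex" where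
  "Lt m a b c n i = (pochhammer (- of_nat n) (i m) * pochhammer (c (m+1)) (i m))
            / (pochhammer (- a - of_nat n + b m + c (m+1)) (i m)
               * pochhammer (- a - of_nat n + b (m+1) + c (m+1)) (i m))
          * (pochhammer (- 1 - 2 * a - of_nat n + b m + b (m+1) + c m + c (m+1)) (i m)
             * pochhammer (- a - of_nat n + c (m+1)) (i m - i (m-1))
             * pochhammer (b (m+1)) (i (m-1)))
            / (pochhammer (- a - of_nat n + c m + c (m+1)) (i m)
               * fact (i m - i (m-1))
               * pochhammer (- 1 - 2 * a - of_nat n + b m + b (m+1) + c m + c (m+1)) (i (m-1)))"

definition Mk :: "complex \<Rightarrow> (nat \<Rightarrow> complex) \<Rightarrow> (nat \<Rightarrow> complex) \<Rightarrow> (nat \<Rightarrow> nat) \<Rightarrow> nat \<Rightarrow> complex" where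
  "Mk a b c i k = (pochhammer (1 + a - b k - c k) (i k - i (k-1))
               * pochhammer (b (k+1)) (i k) * pochhammer (c (k+1)) (i k))
              / (fact (i k - i (k-1)) * pochhammer (1 + a - b k) (i k)
                 * pochhammer (1 + a - c k) (i k))"

lemma tm_split: "tm m a b c n i = Lt m a b c n i * (\<Prod>k=1..m-1. Mk a b c i k)"
  unfolding tm_def Lt_def Mk_def ..

lemma layer:
  assumes m1: "1 \<le> m" and jn: "j \<le> n" and i': "i' \<in> chains m (n - j)"
    and ha: "P (1 + a + of_nat n) n \<noteq> 0"
    and hX1: "P (- a - of_nat n + b (Suc m) + c (Suc (Suc m))) n \<noteq> 0"
    and hX2: "P (- a - of_nat n + b (Suc (Suc m)) + c (Suc (Suc m))) n \<noteq> 0"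
    and hX3: "P (- a - of_nat n + c (Suc m) + c (Suc (Suc m))) n \<noteq> 0"
    and hE: "P (- 1 - 2 * a - of_nat n + b (Suc m) + b (Suc (Suc m)) + c (Suc m) + c (Suc (Suc m))) n \<noteq> 0"
    and hZ1: "P (1 + a - b (Suc m)) n \<noteq> 0" and hZ2: "P (1 + a - b (Suc (Suc m))) n \<noteq> 0"
    and hZ3: "P (1 + a - c (Suc m)) n \<noteq> 0" and hZ4: "P (1 + a - c (Suc (Suc m))) n \<noteq> 0"
  shows "a * pre (Suc m) a b c n * Lt (Suc m) a b c n (glue m j i')
     = (P a (2 * j) * P (- of_nat n) j * (-1)^j / P (1 + a + of_nat n) j)
       * (P (b (Suc (Suc m))) j * P (c (Suc (Suc m))) j / ((P (1 + a - b (Suc m)) j * P (1 + a - c (Suc m)) j)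
           * (P (1 + a - b (Suc (Suc m))) j * P (1 + a - c (Suc (Suc m))) j)))
       * ((a + 2 * of_nat j) * (pre m (a + 2 * of_nat j) (sh b j) (sh c j) (n - j) * Lt m (a + 2 * of_nat j) (sh b j) (sh c j) (n - j) i'))"
proof -
  define x where "x = i' (m - 1)"
  define y where "y = i' m"
  define r where "r = n - j"
  have n: "n = j + r" using jn r_def by simp
  have xy: "x \<le> y" unfolding x_def y_def by (rule chains_mono[OF i']) auto
  have yr: "y \<le> r" unfolding y_def r_def using i' by (simp add: chains_def)
  define B1 where "B1 = b (Suc m)"
  define B2 where "B2 = b (Suc (Suc m))"
  define C1 where "C1 = c (Suc m)"
  define C2 where "C2 = c (Suc (Suc m))"
  define X1 where "X1 = - a - of_nat n + B1 + C2"
  define X2 where "X2 = - a - of_nat n + B2 + C2"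
  define X3 where "X3 = - a - of_nat n + C1 + C2"
  define E where "E = - 1 - 2 * a - of_nat n + B1 + B2 + C1 + C2"
  have t: "Suc m + 1 = Suc (Suc m)" "Suc m - 1 = m" "m + 1 = Suc m" by auto
  have gl: "glue m j i' (Suc m) = j + y" "glue m j i' m = j + x"
    using m1 by (auto simp: glue_def x_def y_def)
  have dxy: "(j + y) - (j + x) = y - x" by simp
  have nj: "(of_nat (n - j) :: complex) = of_nat r" unfolding r_def ..
  have r1: "- (a + 2 * of_nat j) - of_nat r + (B1 + of_nat j) + (C2 + of_nat j) = X1 + of_nat j"
    "- (a + 2 * of_nat j) - of_nat r + (B2 + of_nat j) + (C2 + of_nat j) = X2 + of_nat j"
    "- (a + 2 * of_nat j) - of_nat r + (C1 + of_nat j) + (C2 + of_nat j) = X3 + of_nat j"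
    "- 1 - 2 * (a + 2 * of_nat j) - of_nat r + (B1 + of_nat j) + (B2 + of_nat j) + (C1 + of_nat j) + (C2 + of_nat j) = E + of_nat j"
    "- (a + 2 * of_nat j) - of_nat r + (C2 + of_nat j) = - a - of_nat n + C2"
    "1 + (a + 2 * of_nat j) - (B1 + of_nat j) - (C2 + of_nat j) = 1 + a - B1 - C2"
    "1 + (a + 2 * of_nat j) - (B2 + of_nat j) - (C2 + of_nat j) = 1 + a - B2 - C2"
    "1 + (a + 2 * of_nat j) - (C1 + of_nat j) - (C2 + of_nat j) = 1 + a - C1 - C2"
    "1 + (a + 2 * of_nat j) - (B1 + of_nat j) = (1 + a - B1) + of_nat j"
    "1 + (a + 2 * of_nat j) - (B2 + of_nat j) = (1 + a - B2) + of_nat j"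
    "1 + (a + 2 * of_nat j) - (C1 + of_nat j) = (1 + a - C1) + of_nat j"
    "1 + (a + 2 * of_nat j) - (C2 + of_nat j) = (1 + a - C2) + of_nat j"
    unfolding X1_def X2_def X3_def E_def n by (simp_all add: algebra_simps)
  have fX: "- a - of_nat n + b (Suc m) + c (Suc (Suc m)) = X1"
    "- a - of_nat n + b (Suc (Suc m)) + c (Suc (Suc m)) = X2"
    "- a - of_nat n + c (Suc m) + c (Suc (Suc m)) = X3"
    "- 1 - 2 * a - of_nat n + b (Suc m) + b (Suc (Suc m)) + c (Suc m) + c (Suc (Suc m)) = E"
    unfolding X1_def X2_def X3_def E_def B1_def B2_def C1_def C2_def by simp_all
  have r6: "1 + a - B1 + of_nat j - (C2 + of_nat j) = 1 + a - B1 - C2"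
    "1 + a - B2 + of_nat j - (C2 + of_nat j) = 1 + a - B2 - C2"
    "1 + a - C1 + of_nat j - (C2 + of_nat j) = 1 + a - C1 - C2" by simp_all
  note hX = hX1 hX2 hX3 hE
  note hX = hX[unfolded fX]
  note hZ = hZ1 hZ2 hZ3 hZ4
  note hZ = hZ[unfolded B1_def[symmetric] B2_def[symmetric] C1_def[symmetric] C2_def[symmetric]]
  have jy: "j + y \<le> n" "j + x \<le> n" using n xy yr by auto
  have s1: "P (- of_nat n) (j + y) = P (- of_nat n) j * P (- of_nat r) y"
    using jy n by (simp add: poch_split')
  have sj: "- (of_nat n :: complex) + of_nat j = - of_nat r" using n by simp
  have s2: "\<And>X k. P X (j + k) = P X j * P (X + of_nat j) k" by (rule poch_split')
  have s4: "\<And>Y. P Y n = P Y r * ((-1)^j * P (1 - Y - of_nat n) j)"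
  proof -
    fix Y
    have "P Y n = P Y r * P (Y + of_nat r) j" unfolding n by (subst add.commute) (rule poch_split')
    also have "P (Y + of_nat r) j = (-1)^j * P (1 - Y - of_nat r - of_nat j) j" by (rule poch_refl)
    finally show "P Y n = P Y r * ((-1)^j * P (1 - Y - of_nat n) j)" unfolding n by (simp add: algebra_simps)
  qed
  have s4': "1 - (1 + a - B1 - C2) - of_nat n = X1" "1 - (1 + a - B2 - C2) - of_nat n = X2"
    "1 - (1 + a - C1 - C2) - of_nat n = X3" unfolding X1_def X2_def X3_def by simp_all
  have s5: "\<And>Z. P Z n = P Z j * P (Z + of_nat j) r" unfolding n by (rule poch_split')
  have s6: "a * P (1 + a) n = P a (2 * j) * (a + 2 * of_nat j) * P (1 + (a + 2 * of_nat j)) r / P (1 + a + of_nat n) j"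
  proof -
    have A: "P a (Suc n + j) = a * P (1 + a) n * P (1 + a + of_nat n) j"
    proof -
      have "P a (Suc n + j) = P a (Suc n) * P (a + of_nat (Suc n)) j" by (rule poch_split')
      also have "P a (Suc n) = a * P (1 + a) n" by (simp add: pochhammer_rec add.commute)
      also have "a + of_nat (Suc n) = 1 + a + of_nat n" by simp
      finally show ?thesis .
    qed
    have B: "P a (Suc n + j) = P a (2 * j) * (a + 2 * of_nat j) * P (1 + (a + 2 * of_nat j)) r"
    proof -
      have e: "Suc n + j = 2 * j + Suc r" using n by simp
      have "P a (Suc n + j) = P a (2 * j) * P (a + of_nat (2 * j)) (Suc r)" unfolding e by (rule poch_split')
      thus ?thesis by (simp add: pochhammer_rec algebra_simps)
    qed
    have "P (1 + a + of_nat n) j \<noteq> 0" using nz_mono[OF ha jn] .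
    with A B show ?thesis by (simp add: field_simps)
  qed
  have nz1: "P X1 j \<noteq> 0" "P (X1 + of_nat j) y \<noteq> 0" "P X2 j \<noteq> 0" "P (X2 + of_nat j) y \<noteq> 0"
     "P X3 j \<noteq> 0" "P (X3 + of_nat j) y \<noteq> 0" "P E j \<noteq> 0" "P (E + of_nat j) y \<noteq> 0" "P (E + of_nat j) x \<noteq> 0"
    using nz_mono[OF hX(1) jy(1)] nz_mono[OF hX(2) jy(1)] nz_mono[OF hX(3) jy(1)] nz_mono[OF hX(4) jy(1)]
      nz_mono[OF hX(4) jy(2)] unfolding s2 by auto
  have nz2: "P (1 + a - B1) j \<noteq> 0" "P (1 + a - B1 + of_nat j) r \<noteq> 0"
    "P (1 + a - B2) j \<noteq> 0" "P (1 + a - B2 + of_nat j) r \<noteq> 0"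
    "P (1 + a - C1) j \<noteq> 0" "P (1 + a - C1 + of_nat j) r \<noteq> 0"
    "P (1 + a - C2) j \<noteq> 0" "P (1 + a - C2 + of_nat j) r \<noteq> 0"
    using hZ unfolding s5 by auto
  have nz3: "P (1 + a + of_nat n) j \<noteq> 0" using nz_mono[OF ha jn] .
  have f: "(fact (y - x) :: complex) \<noteq> 0" by simp
  show ?thesis
    unfolding Lt_def pre_def sh_def t gl x_def[symmetric] y_def[symmetric] dxy fX
    unfolding B1_def[symmetric] B2_def[symmetric] C1_def[symmetric] C2_def[symmetric] fX nj r_def[symmetric]
    unfolding r1 r6
    unfolding s2[of _ y] s2[of _ x] sj
    unfolding s4[of "1 + a - B1 - C2"] s4[of "1 + a - B2 - C2"] s4[of "1 + a - C1 - C2"] s4'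
    unfolding s5[of "1 + a - B1"] s5[of "1 + a - B2"] s5[of "1 + a - C1"] s5[of "1 + a - C2"]
    unfolding times_divide_eq_right mult.assoc[symmetric] s6
    using nz1 nz2 nz3 f by (cases "even j") (simp_all add: field_simps)
qed

lemma Mk_glue:
  assumes k1: "1 \<le> k" and km: "k \<le> m"
  shows "Mk a b c (glue m j i') (Suc k)
     = Mk (a + 2 * of_nat j) (sh b j) (sh c j) i' k
       * (P (b (Suc (Suc k))) j * P (c (Suc (Suc k))) j / (P (1 + a - b (Suc k)) j * P (1 + a - c (Suc k)) j))"
proof -
  have g: "glue m j i' (Suc k) = j + i' k" "glue m j i' (Suc k - 1) = j + i' (k - 1)"
    using k1 km by (auto simp: glue_def)
  have d: "(j + i' k) - (j + i' (k - 1)) = i' k - i' (k - 1)" by simp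
  have e1: "1 + (a + 2 * of_nat j) - (b (Suc k) + of_nat j) - (c (Suc k) + of_nat j) = 1 + a - b (Suc k) - c (Suc k)" by simp
  have e2: "1 + (a + 2 * of_nat j) - (b (Suc k) + of_nat j) = (1 + a - b (Suc k)) + of_nat j" by simp
  have e3: "1 + (a + 2 * of_nat j) - (c (Suc k) + of_nat j) = (1 + a - c (Suc k)) + of_nat j" by simp
  have t: "Suc k + 1 = Suc (Suc k)" "k + 1 = Suc k" by simp_all
  show ?thesis
    unfolding Mk_def sh_def g d t e1 e2 e3 poch_split'
    by (simp add: divide_inverse inverse_mult_distrib mult_ac)
qed

lemma Mk_glue1: "i' 0 = 0 \<Longrightarrow> Mk a b c (glue m j i') 1 = P (1 + a - b 1 - c 1) j * P (b 2) j * P (c 2) j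
   / (fact j * P (1 + a - b 1) j * P (1 + a - c 1) j)"
proof -
  assume i0: "i' 0 = 0"
  have g: "glue m j i' 1 = j" "glue m j i' (1 - 1) = 0" "(1::nat) + 1 = 2"
    using i0 by (simp_all add: glue_def)
  show ?thesis unfolding Mk_def g by simp
qed

lemma prod_glue:
  assumes m1: "m = Suc p"
  shows "(\<Prod>k=1..Suc m - 1. Mk a b c (glue m j i') k)
     = Mk a b c (glue m j i') 1 * (\<Prod>k=1..m-1. Mk (a + 2 * of_nat j) (sh b j) (sh c j) i' k)
       * (\<Prod>k=1..m-1. P (b (Suc (Suc k))) j * P (c (Suc (Suc k))) j / (P (1 + a - b (Suc k)) j * P (1 + a - c (Suc k)) j))"
proof -
  have "(\<Prod>k=1..Suc m - 1. Mk a b c (glue m j i') k) = (\<Prod>k=Suc 0..Suc p. Mk a b c (glue m j i') k)"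
    using m1 by simp
  also have "\<dots> = Mk a b c (glue m j i') 1 * (\<Prod>k=Suc 1..Suc p. Mk a b c (glue m j i') k)"
    by (subst prod.atLeast_Suc_atMost) auto
  also have "(\<Prod>k=Suc 1..Suc p. Mk a b c (glue m j i') k) = (\<Prod>k=1..p. Mk a b c (glue m j i') (Suc k))"
    by (rule prod.shift_bounds_cl_Suc_ivl)
  also have "\<dots> = (\<Prod>k=1..p. Mk (a + 2 * of_nat j) (sh b j) (sh c j) i' k
       * (P (b (Suc (Suc k))) j * P (c (Suc (Suc k))) j / (P (1 + a - b (Suc k)) j * P (1 + a - c (Suc k)) j)))"
    by (rule prod.cong[OF refl], rule Mk_glue) (auto simp: m1)
  finally have *: "(\<Prod>k=1..Suc m - 1. Mk a b c (glue m j i') k) = Mk a b c (glue m j i') 1 * ((\<Prod>k=1..p. Mk (a + 2 * of_nat j) (sh b j) (sh c j) i' k)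
       * (\<Prod>k=1..p. P (b (Suc (Suc k))) j * P (c (Suc (Suc k))) j / (P (1 + a - b (Suc k)) j * P (1 + a - c (Suc k)) j)))"
    by (simp only: prod.distrib)
  show ?thesis unfolding * unfolding m1 diff_Suc_1 by (simp only: mult.assoc)
qed

lemma tele:
  fixes Q S :: "nat \<Rightarrow> complex"
  shows "Q 2 * Q (Suc p + 2) / (S (Suc p + 1) * S (Suc p + 2)) * (\<Prod>k=1..p. Q (Suc (Suc k)) / S (Suc k))
       = (\<Prod>r<Suc (Suc p). Q (Suc (Suc r)) / S (Suc (Suc r)))"
proof (induction p)
  case 0
  then show ?case by (simp add: numeral_2_eq_2 numeral_3_eq_3 mult_ac)
next
  case (Suc p)
  have "Q 2 * Q (Suc (Suc p) + 2) / (S (Suc (Suc p) + 1) * S (Suc (Suc p) + 2)) * (\<Prod>k=1..Suc p. Q (Suc (Suc k)) / S (Suc k))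
      = (Q 2 * Q (Suc p + 2) / (S (Suc p + 1) * S (Suc p + 2)) * (\<Prod>k=1..p. Q (Suc (Suc k)) / S (Suc k)))
        * (Q (Suc (Suc (Suc (Suc p)))) / S (Suc (Suc (Suc (Suc p)))))"
    by (simp add: divide_inverse inverse_mult_distrib mult_ac)
  also have "\<dots> = (\<Prod>r<Suc (Suc (Suc p)). Q (Suc (Suc r)) / S (Suc (Suc r)))"
    unfolding Suc.IH by simp
  finally show ?case .
qed

definition Hyp :: "nat \<Rightarrow> complex \<Rightarrow> (nat \<Rightarrow> complex) \<Rightarrow> (nat \<Rightarrow> complex) \<Rightarrow> nat \<Rightarrow> bool" where
  "Hyp m a b c n = ((\<forall>j\<in>{1..m+1}. P (1 + a - b j) n \<noteq> 0) \<and> (\<forall>j\<in>{1..m+1}. P (1 + a - c j) n \<noteq> 0)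
     \<and> P (1 + a + of_nat n) n \<noteq> 0
     \<and> P (- a - of_nat n + b m + c (m+1)) n \<noteq> 0
     \<and> P (- a - of_nat n + b (m+1) + c (m+1)) n \<noteq> 0
     \<and> P (- a - of_nat n + c m + c (m+1)) n \<noteq> 0
     \<and> P (- 1 - 2 * a - of_nat n + b m + b (m+1) + c m + c (m+1)) n \<noteq> 0)"

lemma Hyp_shift:
  assumes H: "Hyp (Suc m) a b c n" and j: "j \<le> n"
  shows "Hyp m (a + 2 * of_nat j) (sh b j) (sh c j) (n - j)"
proof -
  have nj: "(of_nat (n - j) :: complex) = of_nat n - of_nat j" using j by (simp add: of_nat_diff)
  have "\<forall>k\<in>{1..m+1}. P (1 + (a + 2 * of_nat j) - sh b j k) (n - j) \<noteq> 0"
  proof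
    fix k assume k: "k \<in> {1..m+1}"
    hence "P (1 + a - b (Suc k)) n \<noteq> 0" using H by (auto simp: Hyp_def)
    from nz_shift[OF this j] show "P (1 + (a + 2 * of_nat j) - sh b j k) (n - j) \<noteq> 0"
      by (simp add: sh_def algebra_simps)
  qed
  moreover have "\<forall>k\<in>{1..m+1}. P (1 + (a + 2 * of_nat j) - sh c j k) (n - j) \<noteq> 0"
  proof
    fix k assume k: "k \<in> {1..m+1}"
    hence "P (1 + a - c (Suc k)) n \<noteq> 0" using H by (auto simp: Hyp_def)
    from nz_shift[OF this j] show "P (1 + (a + 2 * of_nat j) - sh c j k) (n - j) \<noteq> 0"
      by (simp add: sh_def algebra_simps)
  qed
  moreover have "P (1 + (a + 2 * of_nat j) + of_nat (n - j)) (n - j) \<noteq> 0"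
    using nz_shift[of "1 + a + of_nat n" n j] H j unfolding nj by (simp add: Hyp_def algebra_simps)
  moreover have "P (- (a + 2 * of_nat j) - of_nat (n - j) + sh b j m + sh c j (m+1)) (n - j) \<noteq> 0"
    using nz_shift[of "- a - of_nat n + b (Suc m) + c (Suc m + 1)" n j] H j unfolding nj
    by (simp add: Hyp_def sh_def algebra_simps)
  moreover have "P (- (a + 2 * of_nat j) - of_nat (n - j) + sh b j (m+1) + sh c j (m+1)) (n - j) \<noteq> 0"
    using nz_shift[of "- a - of_nat n + b (Suc m + 1) + c (Suc m + 1)" n j] H j unfolding nj
    by (simp add: Hyp_def sh_def algebra_simps)
  moreover have "P (- (a + 2 * of_nat j) - of_nat (n - j) + sh c j m + sh c j (m+1)) (n - j) \<noteq> 0"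
    using nz_shift[of "- a - of_nat n + c (Suc m) + c (Suc m + 1)" n j] H j unfolding nj
    by (simp add: Hyp_def sh_def algebra_simps)
  moreover have "P (- 1 - 2 * (a + 2 * of_nat j) - of_nat (n - j) + sh b j m + sh b j (m+1) + sh c j m + sh c j (m+1)) (n - j) \<noteq> 0"
    using nz_shift[of "- 1 - 2 * a - of_nat n + b (Suc m) + b (Suc m + 1) + c (Suc m) + c (Suc m + 1)" n j] H j unfolding nj
    by (simp add: Hyp_def sh_def algebra_simps)
  ultimately show ?thesis unfolding Hyp_def by blast
qed

lemma alg_step:
  fixes X W R c0 p' l' M1 sj Q2 D1 K Rp PB PM :: complex
  assumes "X = W * R * (c0 * (p' * l'))" "M1 = sj * Q2 / D1" "K = sj / D1 * W" "Rp = Q2 * R * PB"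
  shows "X * (M1 * PM * PB) = K * Rp * (c0 * (p' * (l' * PM)))"
  unfolding assms by (simp add: divide_inverse mult_ac)

lemma step_term:
  assumes m: "m = Suc p" and jn: "j \<le> n" and i': "i' \<in> chains m (n - j)" and H: "Hyp (Suc m) a b c n"
  shows "a * pre (Suc m) a b c n * tm (Suc m) a b c n (glue m j i')
    = Kc a (b 1) (c 1) n j * Rp (Suc m) a (\<lambda>r. b (Suc r)) (\<lambda>r. c (Suc r)) j
      * ((a + 2 * of_nat j) * (pre m (a + 2 * of_nat j) (sh b j) (sh c j) (n - j)
          * tm m (a + 2 * of_nat j) (sh b j) (sh c j) (n - j) i'))"
proof -
  define Q where "Q = (\<lambda>k. P (b k) j * P (c k) j)"
  define S where "S = (\<lambda>k. P (1 + a - b k) j * P (1 + a - c k) j)"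
  have HH: "P (1 + a + of_nat n) n \<noteq> 0"
    "P (- a - of_nat n + b (Suc m) + c (Suc (Suc m))) n \<noteq> 0"
    "P (- a - of_nat n + b (Suc (Suc m)) + c (Suc (Suc m))) n \<noteq> 0"
    "P (- a - of_nat n + c (Suc m) + c (Suc (Suc m))) n \<noteq> 0"
    "P (- 1 - 2 * a - of_nat n + b (Suc m) + b (Suc (Suc m)) + c (Suc m) + c (Suc (Suc m))) n \<noteq> 0"
    "P (1 + a - b (Suc m)) n \<noteq> 0" "P (1 + a - b (Suc (Suc m))) n \<noteq> 0"
    "P (1 + a - c (Suc m)) n \<noteq> 0" "P (1 + a - c (Suc (Suc m))) n \<noteq> 0"
    using H by (auto simp: Hyp_def)
  have lay: "a * pre (Suc m) a b c n * Lt (Suc m) a b c n (glue m j i')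
     = (P a (2 * j) * P (- of_nat n) j * (-1)^j / P (1 + a + of_nat n) j)
       * (Q (Suc (Suc m)) / (S (Suc m) * S (Suc (Suc m))))
       * ((a + 2 * of_nat j) * (pre m (a + 2 * of_nat j) (sh b j) (sh c j) (n - j) * Lt m (a + 2 * of_nat j) (sh b j) (sh c j) (n - j) i'))"
    unfolding Q_def S_def using layer[OF _ jn i' HH] m by simp
  have i0: "i' 0 = 0" using i' by (simp add: chains_def)
  have M1: "Mk a b c (glue m j i') 1 = P (1 + a - b 1 - c 1) j * Q 2 / (fact j * P (1 + a - b 1) j * P (1 + a - c 1) j)"
    unfolding Mk_glue1[where i'=i', OF i0] Q_def by (simp add: mult.assoc)
  have Kc: "Kc a (b 1) (c 1) n j = P (1 + a - b 1 - c 1) j / (fact j * P (1 + a - b 1) j * P (1 + a - c 1) j)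
     * (P a (2 * j) * P (- of_nat n) j * (-1)^j / P (1 + a + of_nat n) j)"
    unfolding Kc_def ..
  have Rp: "Rp (Suc m) a (\<lambda>r. b (Suc r)) (\<lambda>r. c (Suc r)) j
     = Q 2 * (Q (Suc (Suc m)) / (S (Suc m) * S (Suc (Suc m))))
       * (\<Prod>k=1..m-1. P (b (Suc (Suc k))) j * P (c (Suc (Suc k))) j / (P (1 + a - b (Suc k)) j * P (1 + a - c (Suc k)) j))"
  proof -
    have "Rp (Suc m) a (\<lambda>r. b (Suc r)) (\<lambda>r. c (Suc r)) j = (\<Prod>r<Suc (Suc p). Q (Suc (Suc r)) / S (Suc (Suc r)))"
      unfolding Rp_def Rt_def Q_def S_def m ..
    also have "\<dots> = Q 2 * Q (Suc p + 2) / (S (Suc p + 1) * S (Suc p + 2)) * (\<Prod>k=1..p. Q (Suc (Suc k)) / S (Suc k))"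
      by (rule tele[symmetric])
    finally show ?thesis unfolding m Q_def S_def by (simp add: mult.assoc)
  qed
  show ?thesis
    unfolding tm_split prod_glue[OF m] mult.assoc[of a, symmetric] mult.assoc[of "a * pre (Suc m) a b c n", symmetric]
    by (rule alg_step[OF lay M1 Kc Rp])
qed

lemma main_Fq:
  assumes "Hyp (Suc p) a b c n"
  shows "Fq (Suc (Suc p)) a b c n = a * (pre (Suc p) a b c n * (\<Sum>i\<in>chains (Suc p) n. tm (Suc p) a b c n i))"
  using assms
proof (induction p arbitrary: a b c n)
  case 0
  have H: "P (1 + a - b 1) n \<noteq> 0" "P (1 + a - c 1) n \<noteq> 0" "P (1 + a - b 2) n \<noteq> 0" "P (1 + a - c 2) n \<noteq> 0"
    "P (1 + a + of_nat n) n \<noteq> 0"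
    "P (- a - of_nat n + b 1 + c 2) n \<noteq> 0" "P (- a - of_nat n + b 2 + c 2) n \<noteq> 0"
    "P (- a - of_nat n + c 1 + c 2) n \<noteq> 0"
    using "0.prems" by (auto simp: Hyp_def numeral_2_eq_2)
  have "Fq 2 a b c n = a * (pre 1 a b c n * (\<Sum>i\<in>chains 1 n. tm 1 a b c n i))"
    by (rule base1[OF H])
  thus ?case by (simp add: numeral_2_eq_2)
next
  case (Suc p)
  define m where "m = Suc p"
  have H: "Hyp (Suc m) a b c n" using Suc.prems m_def by simp
  have hb: "P (1 + a - b 1) n \<noteq> 0" and hc: "P (1 + a - c 1) n \<noteq> 0" and ha: "P (1 + a + of_nat n) n \<noteq> 0"
    using H by (auto simp: Hyp_def)
  have "Fq (Suc (Suc m)) a b c n = (\<Sum>j\<le>n. Kc a (b 1) (c 1) n j * Rp (Suc m) a (\<lambda>r. b (Suc r)) (\<lambda>r. c (Suc r)) j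
            * Fq (Suc m) (a + 2 * of_nat j) (sh b j) (sh c j) (n - j))"
    by (rule peel[where a=a and b=b and c=c and n=n, OF hb hc ha])
  also have "\<dots> = (\<Sum>j\<le>n. \<Sum>i'\<in>chains m (n - j). a * pre (Suc m) a b c n * tm (Suc m) a b c n (glue m j i'))"
  proof (rule sum.cong)
    fix j assume "j \<in> {..n}"
    hence j: "j \<le> n" by simp
    have IH: "Fq (Suc m) (a + 2 * of_nat j) (sh b j) (sh c j) (n - j)
       = (a + 2 * of_nat j) * (pre m (a + 2 * of_nat j) (sh b j) (sh c j) (n - j)
          * (\<Sum>i\<in>chains m (n - j). tm m (a + 2 * of_nat j) (sh b j) (sh c j) (n - j) i))"
      unfolding m_def by (rule Suc.IH) (use Hyp_shift[OF H j] in \<open>simp add: m_def\<close>)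
    show "Kc a (b 1) (c 1) n j * Rp (Suc m) a (\<lambda>r. b (Suc r)) (\<lambda>r. c (Suc r)) j
            * Fq (Suc m) (a + 2 * of_nat j) (sh b j) (sh c j) (n - j)
        = (\<Sum>i'\<in>chains m (n - j). a * pre (Suc m) a b c n * tm (Suc m) a b c n (glue m j i'))"
      unfolding IH sum_distrib_left
      by (rule sum.cong[OF refl], rule step_term[OF m_def j _ H, symmetric]) simp
  qed simp
  also have "\<dots> = a * (pre (Suc m) a b c n * (\<Sum>i\<in>chains (Suc m) n. tm (Suc m) a b c n i))"
    unfolding chains_Suc_sum sum_distrib_left by (simp add: mult.assoc)
  finally show ?case unfolding m_def .
qed

lemma prod_list_pairs:
  "prod_list (map f (concat (map (\<lambda>j. [g j, h j]) [1..<N]))) = (\<Prod>j\<in>{1..<N}. f (g j) * f (h j))"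
proof -
  have "prod_list (map f (concat (map (\<lambda>j. [g j, h j]) [1..<N]))) = prod_list (map (\<lambda>j. f (g j) * f (h j)) [1..<N])"
    by (induction N) (auto simp: map_concat)
  also have "\<dots> = (\<Prod>j\<in>{1..<N}. f (g j) * f (h j))"
    using prod.distinct_set_conv_list[OF distinct_upt, of "\<lambda>j. f (g j) * f (h j)" 1 N] by simp
  finally show ?thesis .
qed

lemma Rp_conv: "Rp (Suc m) a b c k = (\<Prod>j\<in>{1..<m+2}. Rt a (b j) (c j) k)"
proof -
  have eq: "{1..<m+2} = {Suc 0..<Suc (Suc m)}" by simp
  show ?thesis unfolding Rp_def eq
    by (simp only: prod.shift_bounds_Suc_ivl atLeast0LessThan)
qed

lemma half_poch: "a * P (a / 2 + 1) k = P (a / 2) k * (a + 2 * of_nat k)"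
proof -
  have "P (a / 2) (Suc k) = a / 2 * P (a / 2 + 1) k" by (rule pochhammer_rec)
  moreover have "P (a / 2) (Suc k) = P (a / 2) k * (a / 2 + of_nat k)" by (rule pochhammer_Suc)
  ultimately have "a / 2 * P (a / 2 + 1) k = P (a / 2) k * (a / 2 + of_nat k)" by simp
  hence "2 * (a / 2 * P (a / 2 + 1) k) = 2 * (P (a / 2) k * (a / 2 + of_nat k))" by simp
  thus ?thesis by (simp add: algebra_simps)
qed

lemma hterm:
  assumes a0: "a \<noteq> 0" and h2: "P (a / 2) k \<noteq> 0"
    and hb: "\<forall>j\<in>{1..m+1}. P (1 + a - b j) k \<noteq> 0" and hc: "\<forall>j\<in>{1..m+1}. P (1 + a - c j) k \<noteq> 0"
    and hn: "P (1 + a + of_nat n) k \<noteq> 0"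
  shows "hyper_term ([a, a / 2 + 1] @ concat (map (\<lambda>j. [b j, c j]) [1..<m+2]) @ [- of_nat n])
      ([a / 2] @ concat (map (\<lambda>j. [1 + a - b j, 1 + a - c j]) [1..<m+2]) @ [1 + a + of_nat n]) 1 k
    = wt a n k * Rp (Suc m) a b c k / a"
proof -
  define N0 where "N0 = (\<Prod>j\<in>{1..<m+2}. P (b j) k * P (c j) k)"
  define D0 where "D0 = (\<Prod>j\<in>{1..<m+2}. P (1 + a - b j) k * P (1 + a - c j) k)"
  have D0: "D0 \<noteq> 0" unfolding D0_def using hb hc by (auto simp: prod_zero_iff)
  have R: "Rp (Suc m) a b c k = N0 / D0"
    unfolding Rp_conv Rt_def N0_def D0_def by (simp add: prod_dividef)
  have num: "prod_list (map (\<lambda>x. P x k) ([a, a / 2 + 1] @ concat (map (\<lambda>j. [b j, c j]) [1..<m+2]) @ [- of_nat n]))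
     = P a k * P (a / 2 + 1) k * N0 * P (- of_nat n) k"
    unfolding map_append prod_list.append N0_def prod_list_pairs by (simp add: mult_ac)
  have den: "prod_list (map (\<lambda>x. P x k) ([a / 2] @ concat (map (\<lambda>j. [1 + a - b j, 1 + a - c j]) [1..<m+2]) @ [1 + a + of_nat n]))
     = P (a / 2) k * D0 * P (1 + a + of_nat n) k"
    unfolding map_append prod_list.append D0_def prod_list_pairs by (simp add: mult_ac)
  have hp: "P (a / 2 + 1) k = P (a / 2) k * (a + 2 * of_nat k) / a"
    using half_poch[of a k] a0 by (simp add: field_simps)
  have f: "(fact k :: complex) \<noteq> 0" by simp
  show ?thesis
    unfolding hyper_term_def num den R wt_def hp
    using a0 h2 D0 hn f by (simp add: field_simps)
qed

lemma hyp_Fq: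
  assumes a0: "a \<noteq> 0" and h2: "P (a / 2) n \<noteq> 0"
    and hb: "\<forall>j\<in>{1..m+1}. P (1 + a - b j) n \<noteq> 0" and hc: "\<forall>j\<in>{1..m+1}. P (1 + a - c j) n \<noteq> 0"
    and hn: "P (1 + a + of_nat n) n \<noteq> 0"
  shows "hypergeom ([a, a / 2 + 1] @ concat (map (\<lambda>j. [b j, c j]) [1..<m+2]) @ [- of_nat n])
      ([a / 2] @ concat (map (\<lambda>j. [1 + a - b j, 1 + a - c j]) [1..<m+2]) @ [1 + a + of_nat n]) 1
    = Fq (Suc m) a b c n / a"
proof -
  let ?as = "[a, a / 2 + 1] @ concat (map (\<lambda>j. [b j, c j]) [1..<m+2]) @ [- of_nat n]"
  let ?bs = "[a / 2] @ concat (map (\<lambda>j. [1 + a - b j, 1 + a - c j]) [1..<m+2]) @ [1 + a + of_nat n]"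
  have z: "hyper_term ?as ?bs 1 k = 0" if "k \<notin> {..n}" for k
  proof -
    have "P (- of_nat n) k = 0" using that by (simp add: pochhammer_of_nat_eq_0_lemma)
    thus ?thesis unfolding hyper_term_def by simp
  qed
  have "hypergeom ?as ?bs 1 = (\<Sum>k\<le>n. hyper_term ?as ?bs 1 k)"
    unfolding hypergeom_def by (rule suminf_finite) (use z in auto)
  also have "\<dots> = (\<Sum>k\<le>n. wt a n k * Rp (Suc m) a b c k / a)"
  proof (rule sum.cong[OF refl])
    fix k assume "k \<in> {..n}"
    hence k: "k \<le> n" by simp
    show "hyper_term ?as ?bs 1 k = wt a n k * Rp (Suc m) a b c k / a"
      by (rule hterm[OF a0 nz_mono[OF h2 k]]) (use hb hc nz_mono[OF hn k] k nz_mono in \<open>blast+\<close>)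
  qed
  also have "\<dots> = Fq (Suc m) a b c n / a"
    unfolding Fq_def by (simp add: sum_divide_distrib)
  finally show ?thesis .
qed

theorem mainTheorem7:
  fixes a :: complex and b c :: "nat \<Rightarrow> complex" and m n :: nat
  assumes "m \<ge> 1" and "n \<ge> 1"
    and "pochhammer (a / 2) n \<noteq> 0"
    and "\<forall>j\<in>{1..m+1}. pochhammer (1 + a - b j) n \<noteq> 0"
    and "\<forall>j\<in>{1..m+1}. pochhammer (1 + a - c j) n \<noteq> 0"
    and "pochhammer (1 + a + of_nat n) n \<noteq> 0"
    and "pochhammer (- a - of_nat n + b m + c (m+1)) n \<noteq> 0"
    and "pochhammer (- a - of_nat n + b (m+1) + c (m+1)) n \<noteq> 0"
    and "pochhammer (- a - of_nat n + c m + c (m+1)) n \<noteq> 0"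
    and "pochhammer (- 1 - 2 * a - of_nat n + b m + b (m+1) + c m + c (m+1)) n \<noteq> 0"
  shows "hypergeom
      ([a, a / 2 + 1] @ concat (map (\<lambda>j. [b j, c j]) [1..<m+2]) @ [- of_nat n])
      ([a / 2] @ concat (map (\<lambda>j. [1 + a - b j, 1 + a - c j]) [1..<m+2]) @ [1 + a + of_nat n])
      1
    = (pochhammer (1 + a) n * pochhammer (1 + a - b m - c (m+1)) n
        * pochhammer (1 + a - b (m+1) - c (m+1)) n * pochhammer (1 + a - c m - c (m+1)) n)
      / (pochhammer (1 + a - b m) n * pochhammer (1 + a - b (m+1)) n
        * pochhammer (1 + a - c m) n * pochhammer (1 + a - c (m+1)) n)
      * (\<Sum>i\<in>chains m n.
          (pochhammer (- of_nat n) (i m) * pochhammer (c (m+1)) (i m))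
            / (pochhammer (- a - of_nat n + b m + c (m+1)) (i m)
               * pochhammer (- a - of_nat n + b (m+1) + c (m+1)) (i m))
          * (pochhammer (- 1 - 2 * a - of_nat n + b m + b (m+1) + c m + c (m+1)) (i m)
             * pochhammer (- a - of_nat n + c (m+1)) (i m - i (m-1))
             * pochhammer (b (m+1)) (i (m-1)))
            / (pochhammer (- a - of_nat n + c m + c (m+1)) (i m)
               * fact (i m - i (m-1))
               * pochhammer (- 1 - 2 * a - of_nat n + b m + b (m+1) + c m + c (m+1)) (i (m-1)))
          * (\<Prod>k=1..m-1.
              (pochhammer (1 + a - b k - c k) (i k - i (k-1))
               * pochhammer (b (k+1)) (i k) * pochhammer (c (k+1)) (i k))
              / (fact (i k - i (k-1)) * pochhammer (1 + a - b k) (i k)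
                 * pochhammer (1 + a - c k) (i k))))"
proof -
  obtain p where m: "m = Suc p" using assms(1) by (cases m) auto
  have a0: "a \<noteq> 0"
  proof
    assume "a = 0"
    hence "P (a / 2) n = 0" using assms(2) by (simp add: pochhammer_eq_0_iff)
    thus False using assms(3) by simp
  qed
  have H: "Hyp m a b c n" unfolding Hyp_def using assms(4-10) by blast
  have "hypergeom
      ([a, a / 2 + 1] @ concat (map (\<lambda>j. [b j, c j]) [1..<m+2]) @ [- of_nat n])
      ([a / 2] @ concat (map (\<lambda>j. [1 + a - b j, 1 + a - c j]) [1..<m+2]) @ [1 + a + of_nat n])
      1 = Fq (Suc m) a b c n / a"
    by (rule hyp_Fq[OF a0 assms(3) assms(4) assms(5) assms(6)])
  also have "Fq (Suc m) a b c n = a * (pre m a b c n * (\<Sum>i\<in>chains m n. tm m a b c n i))"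
    using main_Fq[of p a b c n] H m by simp
  finally show ?thesis using a0 unfolding pre_def tm_def by simp
qed


end
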